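(* For every positive integer $t$ there is a constant $C_t$ such that for every $d\ge1$, with $k=d+1$, $U=\{u_1,\dots,u_d\}$ the vertex set of a complete graph and $L$ a $t$-feasible list assignment of $U$, we have $\tau(\mathcal{L}^L_{\mathrm{int}})\leq C_t\,\tau(\mathcal{L}^L_{\mathrm{unif}})$.
   Context: Lists $L(u)\subseteq[d+1]$; an $L$-colouring is an injective $\alpha:U\to[d+1]$ with $\alpha(u)\in L(u)$; $\Omega^L_U$ is their set. $L$ is $t$-feasible if $|L(u_i)|\ge t+1$ for $i\in[t]$ and $|L(u_i)|=d+1$ for $i\in[d]\setminus[t]$. A vertex $u$ is free if $|L(u)|=d+1$ and constrained otherwise. Add an extra vertex $w$ (regarded as free) and extend each $\alpha\in\Omega^L_U$ by letting $\alpha(w)$ be the unique colour of $[d+1]$ not in $\alpha(U)$. For $\alpha,\beta\in\Omega^L_U$ let $f(\alpha,\beta)$ be the permutation of $U\cup\{w\}$ with $f(x)=y$ iff $\alpha(x)=\beta(y)$; $(\alpha,\beta)$ is good if $f(\alpha,\beta)$ has no cycle of length at least $2$ all of whose vertices are constrained. $\mathcal{L}^L_{\mathrm{int}}$ is the continuous-time chain on $\Omega^L_U$ with rate $1/|\Omega^L_U|$ from $\sigma$ to $\eta\neq\sigma$ if $(\sigma,\eta)$ is good and $0$ otherwise; $\mathcal{L}^L_{\mathrm{unif}}$ has rate $1/|\Omega^L_U|$ between any two distinct states. $\tau=1/\mathrm{Gap}$, $\mathrm{Gap}$ being the second smallest eigenvalue of minus the generator. *)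

theory Defs
  imports "Jordan_Normal_Form.Char_Poly" "HOL-Library.FuncSet"
begin

text \<open>Vertices u_1..u_d are represented by the naturals 1..d, the extra vertex w by 0.
Colours [d+1] are 1..d+1.  A list assignment is L :: nat => nat set (values off 1..d are irrelevant).\<close>

definition colours :: "nat \<Rightarrow> nat set" where
  "colours d = {1..d+1}"

definition t_feasible :: "nat \<Rightarrow> nat \<Rightarrow> (nat \<Rightarrow> nat set) \<Rightarrow> bool" where
  "t_feasible t d L \<longleftrightarrow>
     (\<forall>i\<in>{1..d}. L i \<subseteq> colours d) \<and>
     (\<forall>i\<in>{1..d}. i \<le> t \<longrightarrow> card (L i) \<ge> t + 1) \<and>
     (\<forall>i\<in>{1..d}. t < i \<longrightarrow> card (L i) = d + 1)"

definition Omega :: "nat \<Rightarrow> (nat \<Rightarrow> nat set) \<Rightarrow> (nat \<Rightarrow> nat) set" where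
  "Omega d L = {\<alpha>. \<alpha> \<in> PiE {1..d} L \<and> inj_on \<alpha> {1..d}}"

definition constrained :: "nat \<Rightarrow> (nat \<Rightarrow> nat set) \<Rightarrow> nat \<Rightarrow> bool" where
  "constrained d L x \<longleftrightarrow> x \<in> {1..d} \<and> card (L x) \<noteq> d + 1"

definition ext_col :: "nat \<Rightarrow> (nat \<Rightarrow> nat) \<Rightarrow> nat \<Rightarrow> nat" where
  "ext_col d \<alpha> x = (if x = 0 then (THE c. c \<in> colours d - \<alpha> ` {1..d}) else \<alpha> x)"

definition perm_f :: "nat \<Rightarrow> (nat \<Rightarrow> nat) \<Rightarrow> (nat \<Rightarrow> nat) \<Rightarrow> nat \<Rightarrow> nat" where
  "perm_f d \<alpha> \<beta> x = (THE y. y \<in> {0..d} \<and> ext_col d \<alpha> x = ext_col d \<beta> y)"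

text \<open>(alpha,beta) is good if no cycle of length >= 2 of f has all vertices constrained.\<close>
definition good :: "nat \<Rightarrow> (nat \<Rightarrow> nat set) \<Rightarrow> (nat \<Rightarrow> nat) \<Rightarrow> (nat \<Rightarrow> nat) \<Rightarrow> bool" where
  "good d L \<alpha> \<beta> \<longleftrightarrow>
     \<not> (\<exists>x\<in>{0..d}. perm_f d \<alpha> \<beta> x \<noteq> x \<and>
          (\<forall>n. constrained d L ((perm_f d \<alpha> \<beta> ^^ n) x)))"

definition enum_states :: "'s set \<Rightarrow> 's list" where
  "enum_states S = (SOME xs. set xs = S \<and> distinct xs)"

definition minus_generator :: "'s set \<Rightarrow> ('s \<Rightarrow> 's \<Rightarrow> real) \<Rightarrow> real mat" where
  "minus_generator S r =
     (let xs = enum_states S; n = length xs in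
      mat n n (\<lambda>(i, j). if i = j then (\<Sum>k\<in>{0..<n} - {i}. r (xs ! i) (xs ! k))
                        else - r (xs ! i) (xs ! j)))"

definition spectral_gap :: "'s set \<Rightarrow> ('s \<Rightarrow> 's \<Rightarrow> real) \<Rightarrow> real" where
  "spectral_gap S r = sorted_list_of_multiset (proots (char_poly (minus_generator S r))) ! 1"

definition relax_time :: "'s set \<Rightarrow> ('s \<Rightarrow> 's \<Rightarrow> real) \<Rightarrow> real" where
  "relax_time S r = 1 / spectral_gap S r"

definition rate_int :: "nat \<Rightarrow> (nat \<Rightarrow> nat set) \<Rightarrow> (nat \<Rightarrow> nat) \<Rightarrow> (nat \<Rightarrow> nat) \<Rightarrow> real" where
  "rate_int d L \<sigma> \<eta> = (if \<sigma> \<noteq> \<eta> \<and> good d L \<sigma> \<eta> then 1 / real (card (Omega d L)) else 0)"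

definition rate_unif :: "nat \<Rightarrow> (nat \<Rightarrow> nat set) \<Rightarrow> (nat \<Rightarrow> nat) \<Rightarrow> (nat \<Rightarrow> nat) \<Rightarrow> real" where
  "rate_unif d L \<sigma> \<eta> = (if \<sigma> \<noteq> \<eta> then 1 / real (card (Omega d L)) else 0)"

end

theory Submission
  imports Defs "Jordan_Normal_Form.Schur_Decomposition"
begin

definition mtr :: "'a::comm_ring_1 mat \<Rightarrow> 'a" where
  "mtr M = (\<Sum>i<dim_row M. M $$ (i,i))"

lemma mtr_mult:
  fixes X Y :: "'a::comm_ring_1 mat"
  assumes "X \<in> carrier_mat n n" "Y \<in> carrier_mat n n"
  shows "mtr (X * Y) = (\<Sum>i<n. \<Sum>k<n. X $$ (i,k) * Y $$ (k,i))"
proof -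
  have "mtr (X * Y) = (\<Sum>i<n. (X*Y) $$ (i,i))" using assms by (simp add: mtr_def)
  also have "\<dots> = (\<Sum>i<n. row X i \<bullet> col Y i)" using assms by (intro sum.cong) auto
  also have "\<dots> = (\<Sum>i<n. \<Sum>k<n. X $$ (i,k) * Y $$ (k,i))" using assms
    by (intro sum.cong refl) (simp add: scalar_prod_def lessThan_atLeast0)
  finally show ?thesis .
qed

lemma mtr_comm:
  fixes X Y :: "'a::comm_ring_1 mat"
  assumes "X \<in> carrier_mat n n" "Y \<in> carrier_mat n n"
  shows "mtr (X * Y) = mtr (Y * X)"
proof -
  have "mtr (X * Y) = (\<Sum>i<n. \<Sum>k<n. X $$ (i,k) * Y $$ (k,i))"
    using mtr_mult[OF assms] .
  also have "\<dots> = (\<Sum>k<n. \<Sum>i<n. Y $$ (k,i) * X $$ (i,k))"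
    by (subst sum.swap) (simp add: mult.commute)
  also have "\<dots> = mtr (Y * X)"
    using mtr_mult[OF assms(2,1)] by simp
  finally show ?thesis .
qed

lemma mtr_similar:
  fixes A B :: "'a::comm_ring_1 mat"
  assumes "similar_mat_wit A B P Q"
  shows "mtr A = mtr B"
proof -
  define n where "n = dim_row A"
  have h: "{A,B,P,Q} \<subseteq> carrier_mat n n \<and> P * Q = 1\<^sub>m n \<and> Q * P = 1\<^sub>m n \<and> A = P * B * Q"
    using assms unfolding similar_mat_wit_def Let_def n_def by assumption
  hence c: "B \<in> carrier_mat n n" "P \<in> carrier_mat n n" "Q \<in> carrier_mat n n"
    and qp: "Q * P = 1\<^sub>m n" and a: "A = P * B * Q" by (auto simp only: insert_subset)
  have "mtr A = mtr (P * (B * Q))" unfolding a by (subst assoc_mult_mat[OF c(2) c(1) c(3)]) (rule refl)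
  also have "\<dots> = mtr ((B * Q) * P)" by (rule mtr_comm[of _ n]) (use c in auto)
  also have "(B * Q) * P = B * (Q * P)" by (rule assoc_mult_mat[OF c(1) c(3) c(2)])
  also have "\<dots> = B" unfolding qp using c(1) by (rule right_mult_one_mat)
  finally show ?thesis .
qed

lemma herm_eig_real:
  fixes A :: "real mat"
  assumes A: "A \<in> carrier_mat n n" and sym: "\<And>i j. i < n \<Longrightarrow> j < n \<Longrightarrow> A $$ (i,j) = A $$ (j,i)"
    and ev: "poly (char_poly (map_mat complex_of_real A)) e = 0"
  shows "Im e = 0"
proof -
  let ?A = "map_mat complex_of_real A"
  have Ac: "?A \<in> carrier_mat n n" using A by simp
  from ev eigenvalue_root_char_poly[OF Ac] obtain v where evv: "eigenvector ?A v e"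
    unfolding eigenvalue_def by auto
  hence v: "v \<in> carrier_vec n" "v \<noteq> 0\<^sub>v n" and Av: "?A *\<^sub>v v = e \<cdot>\<^sub>v v"
    unfolding eigenvector_def using Ac by auto
  define s where "s = (\<Sum>i<n. \<Sum>j<n. cnj (v$i) * complex_of_real (A $$ (i,j)) * v$j)"
  have mv: "(?A *\<^sub>v v) $ i = (\<Sum>j<n. complex_of_real (A $$ (i,j)) * v$j)" if "i < n" for i
    using A v that by (simp add: scalar_prod_def row_def lessThan_atLeast0)
  have "s = (\<Sum>i<n. cnj (v$i) * (?A *\<^sub>v v) $ i)"
    unfolding s_def by (simp add: mv sum_distrib_left mult.assoc)
  also have "\<dots> = (\<Sum>i<n. cnj (v$i) * (e * v$i))" using Av v by simp
  also have "\<dots> = e * (\<Sum>i<n. cnj (v$i) * v$i)"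
    by (simp add: sum_distrib_left mult.commute mult.left_commute)
  finally have s1: "s = e * (\<Sum>i<n. cnj (v$i) * v$i)" .
  have "cnj s = (\<Sum>i<n. \<Sum>j<n. v$i * complex_of_real (A $$ (i,j)) * cnj (v$j))"
    unfolding s_def by (simp add: cnj_sum)
  also have "\<dots> = (\<Sum>j<n. \<Sum>i<n. v$i * complex_of_real (A $$ (i,j)) * cnj (v$j))"
    by (rule sum.swap)
  also have "\<dots> = s" unfolding s_def
  proof (intro sum.cong refl)
    fix j i assume "j \<in> {..<n}" "i \<in> {..<n}"
    hence "A$$(i,j) = A$$(j,i)" using sym by auto
    thus "v$i * complex_of_real (A$$(i,j)) * cnj (v$j) = cnj (v$j) * complex_of_real (A$$(j,i)) * v$i"
      by (simp add: mult.commute mult.left_commute)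
  qed
  finally have "cnj s = s" .
  hence ims: "Im s = 0"
  proof -
    have "Im (cnj s) = Im s" using \<open>cnj s = s\<close> by simp
    thus ?thesis by simp
  qed
  define w where "w = (\<Sum>i<n. (cmod (v$i))^2)"
  have cw: "(\<Sum>i<n. cnj (v$i) * v$i) = complex_of_real w"
    unfolding w_def of_real_sum
  proof (intro sum.cong refl)
    fix i show "cnj (v $ i) * v $ i = complex_of_real ((cmod (v $ i))\<^sup>2)"
      by (subst complex_norm_square) (simp add: mult.commute)
  qed
  have "\<exists>i<n. v$i \<noteq> 0"
  proof (rule ccontr)
    assume "\<not> ?thesis"
    hence "v = 0\<^sub>v n" using v(1) by (intro eq_vecI) auto
    with v(2) show False by simp
  qed
  then obtain i where i: "i < n" "v$i \<noteq> 0" by blast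
  have "w > 0" unfolding w_def
    by (rule sum_pos2[of _ i]) (use i in auto)
  from ims s1 cw have "Im e * w = 0" by simp
  with \<open>w > 0\<close> show ?thesis by simp
qed

interpretation rpoly: map_poly_inj_idom_hom "of_real :: real \<Rightarrow> complex" ..

lemma poly_prod_lin_root:
  fixes es :: "'a::idom list"
  assumes "e \<in> set es"
  shows "poly (\<Prod>a\<leftarrow>es. [:- a, 1:]) e = 0"
  using assms by (induct es) auto

lemma map_poly_prod_lin:
  "map_poly complex_of_real (\<Prod>r\<leftarrow>rs. [:- r, 1:]) = (\<Prod>r\<leftarrow>rs. [:- complex_of_real r, 1:])"
proof (induct rs)
  case (Cons a rs)
  have m: "map_poly complex_of_real [:- a, 1:] = [:- complex_of_real a, 1:]" by simp
  show ?case by (simp only: list.map prod_list.Cons rpoly.hom_mult m Cons.hyps)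
qed simp

lemma Re_sum_list_of_real: "Re (sum_list (map complex_of_real rs)) = sum_list rs"
  by (induct rs) auto

lemma real_sym_factor:
  fixes A :: "real mat"
  assumes A: "A \<in> carrier_mat n n" and sym: "\<And>i j. i < n \<Longrightarrow> j < n \<Longrightarrow> A $$ (i,j) = A $$ (j,i)"
  shows "\<exists>rs. length rs = n \<and> char_poly A = (\<Prod>r\<leftarrow>rs. [:- r, 1:]) \<and> sum_list rs = mtr A"
proof -
  let ?A = "map_mat complex_of_real A"
  have Ac: "?A \<in> carrier_mat n n" using A by simp
  obtain es where es: "char_poly ?A = (\<Prod>a\<leftarrow>es. [:- a, 1:])" "length es = n"
    using char_poly_factorized[OF Ac] by blast
  have cp: "char_poly ?A = map_poly complex_of_real (char_poly A)"
    using of_real_hom.char_poly_hom[OF A] .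
  have re: "e = complex_of_real (Re e)" if "e \<in> set es" for e
  proof -
    have "poly (char_poly ?A) e = 0" unfolding es(1) using that by (rule poly_prod_lin_root)
    from herm_eig_real[OF A sym this] show ?thesis by (simp add: complex_eq_iff)
  qed
  define rs where "rs = map Re es"
  have es_rs: "es = map complex_of_real rs"
    unfolding rs_def using re by (induct es) auto
  have "map_poly complex_of_real (char_poly A) = map_poly complex_of_real (\<Prod>r\<leftarrow>rs. [:- r, 1:])"
    unfolding cp[symmetric] es(1) map_poly_prod_lin es_rs by (simp add: comp_def)
  hence cpA: "char_poly A = (\<Prod>r\<leftarrow>rs. [:- r, 1:])"
    by (simp add: rpoly.eq_iff)
  obtain B P Q where sd: "schur_decomposition ?A es = (B,P,Q)" by (cases "schur_decomposition ?A es") auto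
  from schur_decomposition[OF Ac es(1) sd] have sim: "similar_mat_wit ?A B P Q"
    and dg: "diag_mat B = es" by auto
  have Bc: "B \<in> carrier_mat n n" using similar_mat_witD2[OF Ac sim] by auto
  have "mtr ?A = mtr B" by (rule mtr_similar[OF sim])
  also have "mtr B = sum_list es" unfolding dg[symmetric] diag_mat_def mtr_def
    by (simp add: sum_list_sum_nth atLeast0LessThan)
  finally have "mtr ?A = sum_list es" .
  hence "Re (mtr ?A) = sum_list rs" unfolding es_rs by (simp only: Re_sum_list_of_real)
  moreover have "Re (mtr ?A) = mtr A" using A by (simp add: mtr_def)
  ultimately have "sum_list rs = mtr A" by simp
  moreover have "length rs = n" using es(2) rs_def by simp
  ultimately show ?thesis using cpA by blast
qed

lemma sym_sum_zero:
  fixes a :: "nat \<Rightarrow> nat \<Rightarrow> real"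
  assumes sym: "\<And>i j. i < n \<Longrightarrow> j < n \<Longrightarrow> a i j = a j i"
  shows "(\<Sum>i<n. \<Sum>j<n. a i j * (v i - v j)) = 0"
proof -
  let ?T = "(\<Sum>i<n. \<Sum>j<n. a i j * (v i - v j))"
  have "?T = (\<Sum>j<n. \<Sum>i<n. a i j * (v i - v j))" by (rule sum.swap)
  also have "\<dots> = (\<Sum>j<n. \<Sum>i<n. - (a j i * (v j - v i)))"
    by (intro sum.cong refl) (simp add: sym algebra_simps)
  also have "\<dots> = - ?T" by (simp add: sum_negf)
  finally show ?thesis by simp
qed

lemma sym_sum_quad:
  fixes a :: "nat \<Rightarrow> nat \<Rightarrow> real"
  assumes sym: "\<And>i j. i < n \<Longrightarrow> j < n \<Longrightarrow> a i j = a j i"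
  shows "(\<Sum>i<n. v i * (\<Sum>j<n. a i j * (v i - v j))) = (1/2) * (\<Sum>i<n. \<Sum>j<n. a i j * (v i - v j)^2)"
proof -
  let ?Q = "(\<Sum>i<n. \<Sum>j<n. a i j * v i * (v i - v j))"
  have q: "(\<Sum>i<n. v i * (\<Sum>j<n. a i j * (v i - v j))) = ?Q"
    by (simp add: sum_distrib_left mult.commute mult.left_commute)
  have "?Q = (\<Sum>j<n. \<Sum>i<n. a i j * v i * (v i - v j))" by (rule sum.swap)
  also have "\<dots> = (\<Sum>j<n. \<Sum>i<n. a j i * v i * (v i - v j))"
    by (intro sum.cong refl) (simp add: sym)
  finally have q2: "?Q = (\<Sum>i<n. \<Sum>j<n. a i j * v j * (v j - v i))" by simp
  have "2 * ?Q = (\<Sum>i<n. \<Sum>j<n. a i j * v i * (v i - v j)) + (\<Sum>i<n. \<Sum>j<n. a i j * v j * (v j - v i))"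
    using q2 by simp
  also have "\<dots> = (\<Sum>i<n. \<Sum>j<n. a i j * (v i - v j)^2)"
    by (simp add: sum.distrib[symmetric] power2_eq_square algebra_simps)
  finally show ?thesis using q by simp
qed

lemma enum_states_props:
  assumes "finite S"
  shows "set (enum_states S) = S" "distinct (enum_states S)" "length (enum_states S) = card S"
proof -
  have "set (enum_states S) = S \<and> distinct (enum_states S)"
    unfolding enum_states_def by (rule someI_ex) (rule finite_distinct_list[OF assms])
  thus "set (enum_states S) = S" "distinct (enum_states S)" by auto
  thus "length (enum_states S) = card S" using distinct_card by metis
qed

lemma mg_carrier: "minus_generator S r \<in> carrier_mat (length (enum_states S)) (length (enum_states S))"
  unfolding minus_generator_def Let_def by simp

lemma mg_index:
  assumes "i < length (enum_states S)" "j < length (enum_states S)"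
  shows "minus_generator S r $$ (i,j) = (let xs = enum_states S in
     if i = j then (\<Sum>k\<in>{0..<length xs} - {i}. r (xs ! i) (xs ! k)) else - r (xs ! i) (xs ! j))"
  using assms unfolding minus_generator_def Let_def by simp

lemma mg_mult:
  fixes r :: "'s \<Rightarrow> 's \<Rightarrow> real" and S :: "'s set"
  defines "xs \<equiv> enum_states S"
  assumes v: "v \<in> carrier_vec (length xs)" and i: "i < length xs"
  shows "(minus_generator S r *\<^sub>v v) $ i = (\<Sum>j<length xs. r (xs!i) (xs!j) * (v$i - v$j))"
proof -
  let ?n = "length xs"
  let ?M = "minus_generator S r"
  have "(?M *\<^sub>v v) $ i = (\<Sum>j<?n. ?M $$ (i,j) * v$j)"
    using v i mg_carrier[of S r] unfolding xs_def
    by (simp add: scalar_prod_def row_def lessThan_atLeast0)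
  also have "\<dots> = ?M $$ (i,i) * v$i + (\<Sum>j\<in>{..<?n} - {i}. ?M $$ (i,j) * v$j)"
    using i by (subst sum.remove[of _ i]) auto
  also have "?M $$ (i,i) = (\<Sum>k\<in>{..<?n} - {i}. r (xs ! i) (xs ! k))"
    using i mg_index[of i S i r] unfolding xs_def by (simp add: lessThan_atLeast0 Let_def)
  also have "(\<Sum>j\<in>{..<?n} - {i}. ?M $$ (i,j) * v$j) = (\<Sum>j\<in>{..<?n} - {i}. - r (xs!i) (xs!j) * v$j)"
    using i mg_index[of i S _ r] unfolding xs_def by (intro sum.cong refl) (auto simp: Let_def)
  also have "(\<Sum>k\<in>{..<?n} - {i}. r (xs ! i) (xs ! k)) * v$i + (\<Sum>j\<in>{..<?n} - {i}. - r (xs!i) (xs!j) * v$j)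
     = (\<Sum>j\<in>{..<?n} - {i}. r (xs!i) (xs!j) * (v$i - v$j))"
    by (simp add: right_diff_distrib sum_subtractf sum_distrib_right sum_negf)
  also have "\<dots> = (\<Sum>j<?n. r (xs!i) (xs!j) * (v$i - v$j))"
    using i by (subst (2) sum.remove[of _ i]) auto
  finally show ?thesis .
qed

lemma lap_eigen:
  fixes r :: "'s \<Rightarrow> 's \<Rightarrow> real" and S :: "'s set"
  defines "xs \<equiv> enum_states S"
  defines "n \<equiv> length xs"
  assumes sym: "\<And>i j. i < n \<Longrightarrow> j < n \<Longrightarrow> r (xs!i) (xs!j) = r (xs!j) (xs!i)"
    and root: "poly (char_poly (minus_generator S r)) lam = 0" and nz: "lam \<noteq> 0"
  shows "\<exists>v. (\<Sum>i<n. v i) = 0 \<and> (\<Sum>i<n. (v i)^2) > 0 \<and>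
     lam * (\<Sum>i<n. (v i)^2) = (1/2) * (\<Sum>i<n. \<Sum>j<n. r (xs!i) (xs!j) * (v i - v j)^2)"
proof -
  let ?M = "minus_generator S r"
  have Mc: "?M \<in> carrier_mat n n" unfolding n_def xs_def by (rule mg_carrier)
  from root eigenvalue_root_char_poly[OF Mc] obtain w where ev: "eigenvector ?M w lam"
    unfolding eigenvalue_def by auto
  hence w: "w \<in> carrier_vec n" "w \<noteq> 0\<^sub>v n" and Mw: "?M *\<^sub>v w = lam \<cdot>\<^sub>v w"
    unfolding eigenvector_def using Mc by auto
  define v where "v = (\<lambda>i. w $ i)"
  have Mi: "lam * v i = (\<Sum>j<n. r (xs!i) (xs!j) * (v i - v j))" if "i < n" for i
  proof -
    have "(?M *\<^sub>v w) $ i = lam * w $ i" using Mw w that by simp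
    moreover have "(?M *\<^sub>v w) $ i = (\<Sum>j<n. r (xs!i) (xs!j) * (w$i - w$j))"
      using mg_mult[of w S i r] w that unfolding n_def xs_def by simp
    ultimately show ?thesis unfolding v_def by simp
  qed
  have "lam * (\<Sum>i<n. v i) = (\<Sum>i<n. \<Sum>j<n. r (xs!i) (xs!j) * (v i - v j))"
    by (simp add: sum_distrib_left Mi)
  also have "\<dots> = 0" by (rule sym_sum_zero) (rule sym)
  finally have s0: "(\<Sum>i<n. v i) = 0" using nz by simp
  have "lam * (\<Sum>i<n. (v i)^2) = (\<Sum>i<n. v i * (lam * v i))"
    by (simp add: sum_distrib_left power2_eq_square mult.commute mult.left_commute)
  also have "\<dots> = (\<Sum>i<n. v i * (\<Sum>j<n. r (xs!i) (xs!j) * (v i - v j)))"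
    by (intro sum.cong refl) (simp add: Mi)
  also have "\<dots> = (1/2) * (\<Sum>i<n. \<Sum>j<n. r (xs!i) (xs!j) * (v i - v j)^2)"
    by (rule sym_sum_quad) (rule sym)
  finally have q: "lam * (\<Sum>i<n. (v i)^2) = (1/2) * (\<Sum>i<n. \<Sum>j<n. r (xs!i) (xs!j) * (v i - v j)^2)" .
  have "\<exists>i<n. w$i \<noteq> 0"
  proof (rule ccontr)
    assume "\<not> ?thesis"
    hence "w = 0\<^sub>v n" using w(1) by (intro eq_vecI) auto
    with w(2) show False by simp
  qed
  then obtain i where i: "i < n" "v i \<noteq> 0" unfolding v_def by blast
  have pos: "(\<Sum>i<n. (v i)^2) > 0"
    by (rule sum_pos2[of _ i]) (use i in auto)
  show ?thesis using s0 pos q by blast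
qed

lemma proots_lin_prod: "proots (\<Prod>r\<leftarrow>rs. [:- r, 1:]) = mset (rs :: real list)"
proof (induct rs)
  case (Cons a rs)
  have "(\<Prod>r\<leftarrow>rs. [:- r, 1:]) \<noteq> 0"
    by (simp only: prod_list_zero_iff) auto
  moreover have "[:- a, 1:] \<noteq> 0" by simp
  ultimately have "proots ([:- a, 1:] * (\<Prod>r\<leftarrow>rs. [:- r, 1:])) = proots [:- a, 1:] + proots (\<Prod>r\<leftarrow>rs. [:- r, 1:])"
    by (intro proots_mult)
  moreover have "proots [:- a, 1:] = {#a#}" using proots_linear_factor[of "-a"] by simp
  ultimately show ?case using Cons by simp
qed simp

lemma gap_list:
  fixes r :: "'s \<Rightarrow> 's \<Rightarrow> real" and S :: "'s set"
  defines "xs \<equiv> enum_states S"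
  defines "n \<equiv> length xs"
  assumes sym: "\<And>i j. i < n \<Longrightarrow> j < n \<Longrightarrow> r (xs!i) (xs!j) = r (xs!j) (xs!i)"
  shows "\<exists>rs. length rs = n \<and> spectral_gap S r = sort rs ! 1 \<and> sum_list rs = mtr (minus_generator S r)
     \<and> (\<forall>x\<in>set rs. poly (char_poly (minus_generator S r)) x = 0)"
proof -
  let ?M = "minus_generator S r"
  have Mc: "?M \<in> carrier_mat n n" unfolding n_def xs_def by (rule mg_carrier)
  have msym: "?M $$ (i,j) = ?M $$ (j,i)" if "i < n" "j < n" for i j
    using that sym[of i j] mg_index[of i S j r] mg_index[of j S i r] unfolding n_def xs_def
    by (auto simp: Let_def)
  from real_sym_factor[OF Mc msym] obtain rs where rs: "length rs = n"
    "char_poly ?M = (\<Prod>r\<leftarrow>rs. [:- r, 1:])" "sum_list rs = mtr ?M" by blast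
  have "spectral_gap S r = sort rs ! 1"
    unfolding spectral_gap_def rs(2) proots_lin_prod by simp
  moreover have "\<forall>x\<in>set rs. poly (char_poly ?M) x = 0"
    unfolding rs(2) using poly_prod_lin_root by blast
  ultimately show ?thesis using rs by blast
qed

lemma relax_le:
  fixes r :: "'s \<Rightarrow> 's \<Rightarrow> real" and S :: "'s set"
  defines "xs \<equiv> enum_states S"
  defines "n \<equiv> length xs"
  assumes sym: "\<And>i j. i < n \<Longrightarrow> j < n \<Longrightarrow> r (xs!i) (xs!j) = r (xs!j) (xs!i)"
    and n2: "n \<ge> 2" and c: "c > 0"
    and roots: "\<And>x. poly (char_poly (minus_generator S r)) x = 0 \<Longrightarrow> x \<noteq> 0 \<Longrightarrow> x \<ge> c"
  shows "relax_time S r \<le> 1 / c"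
proof -
  from gap_list[of S r] sym obtain rs where rs: "length rs = n" "spectral_gap S r = sort rs ! 1"
    "\<forall>x\<in>set rs. poly (char_poly (minus_generator S r)) x = 0"
    unfolding n_def xs_def by blast
  have "sort rs ! 1 \<in> set (sort rs)" using rs(1) n2 by (intro nth_mem) simp
  hence "sort rs ! 1 \<in> set rs" by simp
  hence "sort rs ! 1 = 0 \<or> sort rs ! 1 \<ge> c" using rs(3) roots by blast
  thus ?thesis
  proof
    assume "sort rs ! 1 = 0" thus ?thesis using rs(2) c unfolding relax_time_def by simp
  next
    assume "sort rs ! 1 \<ge> c"
    thus ?thesis using rs(2) c unfolding relax_time_def by (simp add: frac_le)
  qed
qed

lemma sum_sq_diff:
  fixes v :: "nat \<Rightarrow> real"
  assumes "(\<Sum>i<n. v i) = 0"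
  shows "(\<Sum>i<n. \<Sum>j<n. (v i - v j)^2) = 2 * real n * (\<Sum>i<n. (v i)^2)"
proof -
  have "(\<Sum>i<n. \<Sum>j<n. (v i - v j)^2) = (\<Sum>i<n. \<Sum>j<n. (v i)^2 + (v j)^2 - 2 * v i * v j)"
    by (intro sum.cong refl) (simp add: power2_eq_square algebra_simps)
  also have "\<dots> = (\<Sum>i<n. real n * (v i)^2 + (\<Sum>j<n. (v j)^2) - 2 * v i * (\<Sum>j<n. v j))"
    by (simp add: sum.distrib sum_subtractf sum_distrib_left mult.assoc)
  also have "\<dots> = (\<Sum>i<n. real n * (v i)^2 + (\<Sum>j<n. (v j)^2))" using assms by simp
  also have "\<dots> = 2 * real n * (\<Sum>i<n. (v i)^2)"
    by (simp add: sum.distrib sum_distrib_left mult.assoc)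
  finally show ?thesis .
qed

lemma sq_tri: "((a::real) - b)^2 \<le> 2 * ((a - c)^2 + (c - b)^2)"
proof -
  have "0 \<le> (a - 2*c + b)^2" by simp
  thus ?thesis by (simp add: power2_eq_square algebra_simps)
qed

lemma flow:
  fixes g :: "nat \<Rightarrow> nat \<Rightarrow> bool" and h :: "nat \<Rightarrow> real" and K :: real
  assumes K: "K > 0"
    and cnt: "\<And>i j. i < n \<Longrightarrow> j < n \<Longrightarrow> real n \<le> K * real (card {k. k < n \<and> g i k \<and> g k j})"
  shows "(\<Sum>i<n. \<Sum>j<n. (h i - h j)^2) \<le> 4 * K * (\<Sum>i<n. \<Sum>j<n. if g i j then (h i - h j)^2 else 0)"
proof (cases "n = 0")
  case True thus ?thesis by simp
next
  case False
  define D where "D i j = (h i - h j)^2" for i j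
  define Gd where "Gd i j = (if g i j then D i j else 0)" for i j
  have Gd0: "Gd i j \<ge> 0" for i j unfolding Gd_def D_def by simp
  have per: "real n * D i j \<le> 2 * K * (\<Sum>k<n. Gd i k + Gd k j)" if ij: "i < n" "j < n" for i j
  proof -
    define Gs where "Gs = {k. k < n \<and> g i k \<and> g k j}"
    have fin: "finite Gs" unfolding Gs_def by simp
    have "real n * D i j \<le> K * real (card Gs) * D i j"
      using cnt[OF ij] unfolding Gs_def D_def by (intro mult_right_mono) auto
    hence 1: "real n * D i j \<le> K * (real (card Gs) * D i j)" by (simp add: mult.assoc)
    have "real (card Gs) * D i j = (\<Sum>k\<in>Gs. D i j)" by simp
    also have "\<dots> \<le> (\<Sum>k\<in>Gs. 2 * (Gd i k + Gd k j))"
      using sq_tri by (intro sum_mono) (auto simp: Gs_def Gd_def D_def simp del: distrib_left_numeral)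
    also have "\<dots> \<le> (\<Sum>k<n. 2 * (Gd i k + Gd k j))"
      by (intro sum_mono2) (auto simp: Gs_def Gd0 add_nonneg_nonneg)
    finally have "real n * D i j \<le> K * (\<Sum>k<n. 2 * (Gd i k + Gd k j))"
      using K 1 by (smt (verit) mult_left_mono)
    thus ?thesis by (simp add: sum_distrib_left[symmetric] mult.assoc mult.left_commute)
  qed
  define Gsum where "Gsum = (\<Sum>i<n. \<Sum>j<n. Gd i j)"
  have "real n * (\<Sum>i<n. \<Sum>j<n. D i j) = (\<Sum>i<n. \<Sum>j<n. real n * D i j)"
    by (simp add: sum_distrib_left)
  also have "\<dots> \<le> (\<Sum>i<n. \<Sum>j<n. 2 * K * (\<Sum>k<n. Gd i k + Gd k j))"
    by (intro sum_mono per) auto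
  also have "\<dots> = (\<Sum>i<n. \<Sum>j<n. 2 * K * ((\<Sum>k<n. Gd i k) + (\<Sum>k<n. Gd k j)))"
    by (simp only: sum.distrib)
  also have "\<dots> = 2 * K * ((\<Sum>i<n. real n * (\<Sum>k<n. Gd i k)) + real n * (\<Sum>j<n. \<Sum>k<n. Gd k j))"
    by (simp add: sum.distrib sum_distrib_left[symmetric])
  also have "(\<Sum>j<n. \<Sum>k<n. Gd k j) = Gsum" unfolding Gsum_def by (rule sum.swap[symmetric])
  also have "(\<Sum>i<n. real n * (\<Sum>k<n. Gd i k)) = real n * Gsum" unfolding Gsum_def by (simp add: sum_distrib_left)
  finally have "real n * (\<Sum>i<n. \<Sum>j<n. D i j) \<le> real n * (4 * K * Gsum)" by (simp add: algebra_simps)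
  hence "(\<Sum>i<n. \<Sum>j<n. D i j) \<le> 4 * K * Gsum" using False by simp
  thus ?thesis unfolding D_def Gsum_def Gd_def by simp
qed

lemma sum_list_le_len: "(\<And>x. x \<in> set zs \<Longrightarrow> x \<le> (1::real)) \<Longrightarrow> sum_list zs \<le> real (length zs)"
  by (induct zs) force+

lemma xs_nth_inj:
  assumes "finite S"
  shows "inj_on (\<lambda>k. enum_states S ! k) {..<card S}"
  using enum_states_props[OF assms] by (auto simp: inj_on_def nth_eq_iff_index_eq)

lemma relax_unif:
  fixes S :: "'s set" and r :: "'s \<Rightarrow> 's \<Rightarrow> real"
  assumes fin: "finite S" and c2: "card S \<ge> 2"
    and r: "\<And>a b. r a b = (if a \<noteq> b then 1 / real (card S) else 0)"
  shows "relax_time S r = 1"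
proof -
  define xs where "xs = enum_states S"
  define n where "n = length xs"
  have n: "n = card S" unfolding n_def xs_def using enum_states_props[OF fin] by simp
  have dist: "distinct xs" unfolding xs_def using enum_states_props[OF fin] by simp
  have rij: "r (xs!i) (xs!j) = (if i \<noteq> j then 1 / real n else 0)" if "i < n" "j < n" for i j
    using that dist r n unfolding n_def by (auto simp: nth_eq_iff_index_eq)
  have sym: "r (xs!i) (xs!j) = r (xs!j) (xs!i)" if "i < n" "j < n" for i j
    using rij[OF that] rij[OF that(2,1)] by simp
  from gap_list[of S r] sym obtain rs where rs: "length rs = n" "spectral_gap S r = sort rs ! 1"
    "sum_list rs = mtr (minus_generator S r)"
    "\<forall>x\<in>set rs. poly (char_poly (minus_generator S r)) x = 0"
    unfolding n_def xs_def by blast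
  have n2: "n \<ge> 2" using c2 n by simp
  have "mtr (minus_generator S r) = (\<Sum>i<n. \<Sum>k\<in>{0..<n} - {i}. r (xs!i) (xs!k))"
    unfolding mtr_def using mg_carrier[of S r] mg_index[of _ S _ r]
    by (intro sum.cong) (auto simp: n_def xs_def Let_def)
  also have "\<dots> = (\<Sum>i<n. \<Sum>k\<in>{0..<n} - {i}. 1 / real n)"
    by (intro sum.cong refl) (auto simp: rij)
  also have "\<dots> = real n * ((real n - 1) / real n)"
    using n2 by (simp add: of_nat_diff)
  also have "\<dots> = real n - 1" using n2 by simp
  finally have tr: "sum_list rs = real n - 1" using rs(3) by simp
  have vals: "x = 0 \<or> x = 1" if "x \<in> set rs" for x
  proof (rule ccontr)
    assume nx: "\<not> (x = 0 \<or> x = 1)"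
    have root: "poly (char_poly (minus_generator S r)) x = 0" using rs(4) that by blast
    from lap_eigen[of S r x] sym root nx obtain v where v: "(\<Sum>i<n. v i) = 0" "(\<Sum>i<n. (v i)^2) > 0"
      "x * (\<Sum>i<n. (v i)^2) = (1/2) * (\<Sum>i<n. \<Sum>j<n. r (xs!i) (xs!j) * (v i - v j)^2)"
      unfolding n_def xs_def by blast
    have "(\<Sum>i<n. \<Sum>j<n. r (xs!i) (xs!j) * (v i - v j)^2) = (\<Sum>i<n. \<Sum>j<n. (1 / real n) * (v i - v j)^2)"
      by (intro sum.cong refl) (auto simp: rij)
    also have "\<dots> = (\<Sum>i<n. \<Sum>j<n. (v i - v j)^2) / real n"
      by (simp add: sum_divide_distrib)
    also have "\<dots> = (1 / real n) * (2 * real n * (\<Sum>i<n. (v i)^2))"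
      using sum_sq_diff[OF v(1)] by simp
    also have "\<dots> = 2 * (\<Sum>i<n. (v i)^2)" using n2 by simp
    finally have "x * (\<Sum>i<n. (v i)^2) = 1 * (\<Sum>i<n. (v i)^2)" using v(3) by simp
    hence "x = 1" using v(2) by simp
    thus False using nx by simp
  qed
  define ys where "ys = sort rs"
  have ys: "sorted ys" "length ys = n" "set ys = set rs" "sum_list ys = sum_list rs"
    unfolding ys_def using rs(1) by (simp, simp, simp, metis mset_sort sum_mset_sum_list)
  obtain a ys' where ys1: "ys = a # ys'" using ys(2) n2 by (cases ys) auto
  obtain b zs where ys2: "ys' = b # zs" using ys1 ys(2) n2 by (cases ys') auto
  have abz: "ys = a # b # zs" using ys1 ys2 by simp
  have "ys ! 1 = 1"
  proof (rule ccontr)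
    assume "ys ! 1 \<noteq> 1"
    hence b0: "b = 0" using vals ys(3) abz by auto
    have "a \<le> b" using ys(1) abz by simp
    moreover have "a = 0 \<or> a = 1" using vals[of a] ys(3) abz by auto
    ultimately have a0: "a = 0" using b0 by auto
    have "sum_list zs \<le> real (length zs)" by (intro sum_list_le_len) (use vals ys(3) abz in force)
    hence "sum_list ys \<le> real n - 2" using abz ys(2) a0 b0 by simp
    thus False using tr ys(4) by simp
  qed
  thus ?thesis using rs(2) unfolding relax_time_def ys_def by simp
qed

lemma relax_int:
  fixes S :: "'s set" and r :: "'s \<Rightarrow> 's \<Rightarrow> real" and G :: "'s \<Rightarrow> 's \<Rightarrow> bool" and K :: real
  assumes fin: "finite S" and c2: "card S \<ge> 2"
    and r: "\<And>a b. r a b = (if a \<noteq> b \<and> G a b then 1 / real (card S) else 0)"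
    and Gsym: "\<And>a b. a \<in> S \<Longrightarrow> b \<in> S \<Longrightarrow> G a b = G b a"
    and K: "K > 0"
    and cnt: "\<And>a b. a \<in> S \<Longrightarrow> b \<in> S \<Longrightarrow> real (card S) \<le> K * real (card {c\<in>S. G a c \<and> G c b})"
  shows "relax_time S r \<le> 4 * K"
proof -
  define xs where "xs = enum_states S"
  define n where "n = length xs"
  have n: "n = card S" unfolding n_def xs_def using enum_states_props[OF fin] by simp
  have dist: "distinct xs" unfolding xs_def using enum_states_props[OF fin] by simp
  have setxs: "set xs = S" unfolding xs_def using enum_states_props[OF fin] by simp
  have inS: "xs ! i \<in> S" if "i < n" for i using that setxs n_def nth_mem by blast
  define g where "g i j = G (xs!i) (xs!j)" for i j
  have rij: "r (xs!i) (xs!j) * (v i - v j)^2 = (1 / real n) * (if g i j then (v i - v j)^2 else 0)"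
    if "i < n" "j < n" for i j and v :: "nat \<Rightarrow> real"
    using that dist r n unfolding n_def g_def by (auto simp: nth_eq_iff_index_eq)
  have sym: "r (xs!i) (xs!j) = r (xs!j) (xs!i)" if "i < n" "j < n" for i j
    using that r Gsym[OF inS inS] by auto
  have n2: "n \<ge> 2" using c2 n by simp
  have cnti: "real n \<le> K * real (card {k. k < n \<and> g i k \<and> g k j})" if "i < n" "j < n" for i j
  proof -
    have "{c\<in>S. G (xs!i) c \<and> G c (xs!j)} = (\<lambda>k. xs ! k) ` {k. k < n \<and> g i k \<and> g k j}"
      unfolding g_def using setxs by (auto simp: in_set_conv_nth n_def)
    moreover have "inj_on (\<lambda>k. xs ! k) {k. k < n \<and> g i k \<and> g k j}"
      using dist by (auto simp: inj_on_def nth_eq_iff_index_eq n_def)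
    ultimately have "card {c\<in>S. G (xs!i) c \<and> G c (xs!j)} = card {k. k < n \<and> g i k \<and> g k j}"
      by (simp add: card_image)
    thus ?thesis using cnt[OF inS[OF that(1)] inS[OF that(2)]] n by simp
  qed
  show ?thesis
  proof (rule relax_le[of S r "1 / (4 * K)", simplified])
    show "\<And>i j. i < length (enum_states S) \<Longrightarrow> j < length (enum_states S) \<Longrightarrow>
      r (enum_states S ! i) (enum_states S ! j) = r (enum_states S ! j) (enum_states S ! i)"
      using sym unfolding n_def xs_def by blast
    show "2 \<le> length (enum_states S)" using n2 unfolding n_def xs_def .
    show "0 < K" by (rule K)
    fix x assume root: "poly (char_poly (minus_generator S r)) x = 0" and nx: "x \<noteq> 0"
    from lap_eigen[of S r x] sym root nx obtain v where v: "(\<Sum>i<n. v i) = 0" "(\<Sum>i<n. (v i)^2) > 0"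
      "x * (\<Sum>i<n. (v i)^2) = (1/2) * (\<Sum>i<n. \<Sum>j<n. r (xs!i) (xs!j) * (v i - v j)^2)"
      unfolding n_def xs_def by blast
    define Gd where "Gd = (\<Sum>i<n. \<Sum>j<n. if g i j then (v i - v j)^2 else 0)"
    have "(\<Sum>i<n. \<Sum>j<n. r (xs!i) (xs!j) * (v i - v j)^2) = (\<Sum>i<n. \<Sum>j<n. (1 / real n) * (if g i j then (v i - v j)^2 else 0))"
      by (intro sum.cong refl) (auto simp: rij)
    also have "\<dots> = Gd / real n" unfolding Gd_def by (simp add: sum_divide_distrib)
    finally have xe: "x * (\<Sum>i<n. (v i)^2) = Gd / (2 * real n)" using v(3) by simp
    define P where "P = 2 * real n * (\<Sum>i<n. (v i)^2)"
    have P0: "P > 0" unfolding P_def using v(2) n2 by simp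
    have "P \<le> 4 * K * Gd"
      unfolding P_def Gd_def sum_sq_diff[OF v(1), symmetric] by (rule flow[OF K cnti])
    moreover have "Gd = P * x" using xe n2 unfolding P_def by (simp add: field_simps)
    ultimately have "P * 1 \<le> P * (4 * K * x)" by (simp add: mult.commute mult.left_commute)
    hence "1 \<le> 4 * K * x" using P0 by (subst (asm) mult_le_cancel_left_pos) auto
    thus "1 / (4 * K) \<le> x" using K by (simp add: field_simps)
  qed
qed

definition acyc :: "nat set \<Rightarrow> (nat \<Rightarrow> nat) \<Rightarrow> (nat \<Rightarrow> nat) \<Rightarrow> bool" where
  "acyc S P R \<longleftrightarrow> (\<exists>\<rho>::nat \<Rightarrow> nat. \<forall>x\<in>S. \<forall>v\<in>S. x \<noteq> v \<longrightarrow> P x = R v \<longrightarrow> \<rho> v < \<rho> x)"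

definition goodset :: "nat set \<Rightarrow> (nat \<Rightarrow> nat set) \<Rightarrow> (nat \<Rightarrow> nat) \<Rightarrow> (nat \<Rightarrow> nat) \<Rightarrow> (nat \<Rightarrow> nat) set" where
  "goodset S L P Q = {R \<in> PiE S L. inj_on R S \<and> acyc S P R \<and> acyc S R Q}"

lemma extend_good:
  assumes fin: "finite S'" and y: "y \<notin> S'" and cy: "c \<in> L y" and cP: "c \<notin> P ` S'"
    and injQ: "inj_on Q (insert y S')"
    and L'def: "\<And>x. L' x = L x - {c} - (if Q x = c then {Q y} else {})"
    and Q'def: "\<And>x. Q' x = (if Q x = c then Q y else Q x)"
    and R': "R' \<in> goodset S' L' P Q'"
  shows "R'(y := c) \<in> goodset (insert y S') L P Q"
proof -
  from R' have R'pi: "R' \<in> PiE S' L'" and R'inj: "inj_on R' S'" and a1: "acyc S' P R'" and a2: "acyc S' R' Q'"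
    unfolding goodset_def by auto
  have R'L': "R' x \<in> L' x" if "x \<in> S'" for x using R'pi that by auto
  have R'c: "R' x \<noteq> c" if "x \<in> S'" for x using R'L'[OF that] L'def by auto
  have R'L: "R' x \<in> L x" if "x \<in> S'" for x using R'L'[OF that] L'def by auto
  let ?R = "R'(y := c)"
  have pi: "?R \<in> PiE (insert y S') L"
    using R'pi cy R'L by (auto simp: PiE_iff extensional_def y)
  have inj: "inj_on ?R (insert y S')"
    using R'inj R'c y unfolding inj_on_def by (metis fun_upd_other fun_upd_same insert_iff)
  from a1 obtain \<rho> :: "nat \<Rightarrow> nat" where \<rho>: "\<And>x v. x \<in> S' \<Longrightarrow> v \<in> S' \<Longrightarrow> x \<noteq> v \<Longrightarrow> P x = R' v \<Longrightarrow> \<rho> v < \<rho> x"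
    unfolding acyc_def by blast
  have ac1: "acyc (insert y S') P ?R"
  proof -
    define \<sigma> where "\<sigma> x = (if x = y then Suc (\<Sum>z\<in>S'. \<rho> z) else \<rho> x)" for x
    have "\<sigma> v < \<sigma> x" if "x \<in> insert y S'" "v \<in> insert y S'" "x \<noteq> v" "P x = ?R v" for x v
    proof (cases "v = y")
      case True
      hence "P x = c" "x \<in> S'" using that by auto
      thus ?thesis using cP by auto
    next
      case False
      hence v: "v \<in> S'" using that by auto
      show ?thesis
      proof (cases "x = y")
        case True
        have "\<rho> v \<le> (\<Sum>z\<in>S'. \<rho> z)" using fin v by (intro member_le_sum) auto
        thus ?thesis using True False unfolding \<sigma>_def by simp
      next
        case xy: False
        hence "x \<in> S'" using that by auto
        thus ?thesis using \<rho>[of x v] v that False xy unfolding \<sigma>_def by simp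
      qed
    qed
    thus ?thesis unfolding acyc_def by blast
  qed
  from a2 obtain \<tau> :: "nat \<Rightarrow> nat" where \<tau>: "\<And>x v. x \<in> S' \<Longrightarrow> v \<in> S' \<Longrightarrow> x \<noteq> v \<Longrightarrow> R' x = Q' v \<Longrightarrow> \<tau> v < \<tau> x"
    unfolding acyc_def by blast
  have Qy: "Q y \<noteq> Q x" if "x \<in> S'" for x using injQ that y unfolding inj_on_def by blast
  have ac2: "acyc (insert y S') ?R Q"
  proof (cases "\<exists>z0\<in>S'. Q z0 = c")
    case True
    then obtain z0 where z0: "z0 \<in> S'" "Q z0 = c" by blast
    have z0u: "z = z0" if "z \<in> S'" "Q z = c" for z
      using injQ that z0 unfolding inj_on_def by blast
    define \<sigma> where "\<sigma> x = (if x = y then 2 * \<tau> z0 + 1 else 2 * \<tau> x)" for x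
    have "\<sigma> v < \<sigma> x" if "x \<in> insert y S'" "v \<in> insert y S'" "x \<noteq> v" "?R x = Q v" for x v
    proof (cases "x = y")
      case True
      hence v: "v \<in> S'" "Q v = c" using that by auto
      hence "v = z0" by (rule z0u)
      thus ?thesis using True v unfolding \<sigma>_def by (auto simp: y)
    next
      case xy: False
      hence x: "x \<in> S'" using that by auto
      show ?thesis
      proof (cases "v = y")
        case True
        hence Rx: "R' x = Q y" using that xy by simp
        have "x \<noteq> z0"
        proof
          assume "x = z0"
          hence "R' x \<notin> L' x" using L'def z0 Rx by auto
          thus False using R'L'[OF x] by simp
        qed
        moreover have "Q' z0 = Q y" using Q'def z0 by simp
        ultimately have "\<tau> z0 < \<tau> x" using \<tau>[OF x z0(1)] Rx by simp
        thus ?thesis using True xy unfolding \<sigma>_def by simp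
      next
        case vy: False
        hence v: "v \<in> S'" using that by auto
        have Rx: "R' x = Q v" using that xy by simp
        have "Q v \<noteq> c" using Rx R'c[OF x] by simp
        hence "Q' v = Q v" using Q'def by simp
        hence "\<tau> v < \<tau> x" using \<tau>[OF x v] Rx that(3) by simp
        thus ?thesis using xy vy unfolding \<sigma>_def by simp
      qed
    qed
    thus ?thesis unfolding acyc_def by blast
  next
    case False
    define \<sigma> where "\<sigma> x = (if x = y then 0 else Suc (\<tau> x))" for x
    have "\<sigma> v < \<sigma> x" if "x \<in> insert y S'" "v \<in> insert y S'" "x \<noteq> v" "?R x = Q v" for x v
    proof (cases "x = y")
      case True
      hence "v \<in> S'" "Q v = c" using that by auto
      thus ?thesis using False by blast
    next
      case xy: False
      hence x: "x \<in> S'" using that by auto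
      show ?thesis
      proof (cases "v = y")
        case True
        thus ?thesis using xy unfolding \<sigma>_def by simp
      next
        case vy: False
        hence v: "v \<in> S'" using that by auto
        have Rx: "R' x = Q v" using that xy by simp
        have "Q v \<noteq> c" using Rx R'c[OF x] by simp
        hence "Q' v = Q v" using Q'def by simp
        hence "\<tau> v < \<tau> x" using \<tau>[OF x v] Rx that(3) by simp
        thus ?thesis using xy vy unfolding \<sigma>_def by simp
      qed
    qed
    thus ?thesis unfolding acyc_def by blast
  qed
  show ?thesis unfolding goodset_def using pi inj ac1 ac2 by blast
qed

lemma goodset_finite:
  assumes "finite S" "\<forall>x\<in>S. finite (L x)"
  shows "finite (goodset S L P Q)"
proof -
  have "finite (PiE S L)" using assms by (intro finite_PiE) auto
  thus ?thesis unfolding goodset_def by (rule finite_subset[rotated]) auto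
qed

lemma goodset_empty: "goodset {} L P Q = {\<lambda>_. undefined}"
  unfolding goodset_def acyc_def by auto

lemma count_good:
  fixes S :: "nat set" and L :: "nat \<Rightarrow> nat set" and P Q :: "nat \<Rightarrow> nat"
  assumes "finite S" "\<forall>x\<in>S. finite (L x)" "inj_on P S" "inj_on Q S"
    "\<forall>x\<in>S. card S \<le> card (L x)"
    "\<forall>x\<in>S. \<forall>x'\<in>S. x \<noteq> x' \<longrightarrow> card S < card (L x) \<or> card S < card (L x')"
  shows "(\<Prod>x\<in>S. max 1 (card (L x) - 3 * card S)) \<le> card (goodset S L P Q)"
  using assms
proof (induction "card S" arbitrary: S L P Q)
  case 0
  hence S: "S = {}" by simp
  show ?case unfolding S goodset_empty by simp
next
  case (Suc m)
  note fin = Suc.prems(1) and finL = Suc.prems(2) and injP = Suc.prems(3) and injQ = Suc.prems(4)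
    and big = Suc.prems(5) and one = Suc.prems(6)
  have Sne: "S \<noteq> {}" using Suc.hyps(2) by auto
  obtain y where y: "y \<in> S" and others: "\<And>x. x \<in> S - {y} \<Longrightarrow> card S < card (L x)"
  proof (cases "\<exists>y\<in>S. \<not> card S < card (L y)")
    case True
    then obtain y where "y \<in> S" "\<not> card S < card (L y)" by blast
    thus ?thesis using one that by blast
  next
    case False
    from Sne obtain y where "y \<in> S" by blast
    thus ?thesis using False that by blast
  qed
  define S' where "S' = S - {y}"
  have S'fin: "finite S'" and yS': "y \<notin> S'" and Sins: "S = insert y S'" using fin y unfolding S'_def by auto
  have cS': "card S' = m" using Suc.hyps(2) fin y unfolding S'_def by simp
  have cS: "card S = Suc m" using Suc.hyps(2) by simp
  define Cset where "Cset = L y - P ` S'"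
  have finC: "finite Cset" unfolding Cset_def using finL y by simp
  have "card (L y) \<le> card (Cset \<union> P ` S')" using finL y S'fin unfolding Cset_def by (intro card_mono) auto
  also have "\<dots> \<le> card Cset + card (P ` S')" by (rule card_Un_le)
  also have "card (P ` S') \<le> m" using card_image_le[OF S'fin, of P] cS' by simp
  finally have cardC: "card (L y) \<le> card Cset + m" by simp
  define L'c where "L'c c x = L x - {c} - (if Q x = c then {Q y} else {})" for c x
  define Q'c where "Q'c c x = (if Q x = c then Q y else Q x)" for c x
  have Qy: "Q y \<noteq> Q x" if "x \<in> S'" for x using injQ that y yS' Sins unfolding inj_on_def by blast
  have cardL': "card (L x) \<le> card (L'c c x) + 2" if "x \<in> S'" for x c
  proof -
    have "L x \<subseteq> L'c c x \<union> {c, Q y}" unfolding L'c_def by auto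
    hence "card (L x) \<le> card (L'c c x \<union> {c, Q y})" using finL that Sins by (intro card_mono) (auto simp: L'c_def)
    also have "\<dots> \<le> card (L'c c x) + card {c, Q y}" by (rule card_Un_le)
    also have "card {c, Q y} \<le> 2" by (simp add: card_insert_if)
    finally show ?thesis by simp
  qed
  have cardL'1: "card (L x) \<le> card (L'c c x) + 1" if "x \<in> S'" "Q x \<noteq> c" for x c
  proof -
    have "L x \<subseteq> L'c c x \<union> {c}" unfolding L'c_def using that by auto
    hence "card (L x) \<le> card (L'c c x \<union> {c})" using finL that Sins by (intro card_mono) (auto simp: L'c_def)
    also have "\<dots> \<le> card (L'c c x) + card {c}" by (rule card_Un_le)
    finally show ?thesis by simp
  qed
  have IH: "(\<Prod>x\<in>S'. max 1 (card (L'c c x) - 3 * m)) \<le> card (goodset S' (L'c c) P (Q'c c))" for c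
  proof -
    have "(\<Prod>x\<in>S'. max 1 (card (L'c c x) - 3 * card S')) \<le> card (goodset S' (L'c c) P (Q'c c))"
    proof (rule Suc.hyps(1))
      show "m = card S'" using cS' by simp
      show "finite S'" by (rule S'fin)
      show "\<forall>x\<in>S'. finite (L'c c x)" using finL Sins unfolding L'c_def by auto
      show "inj_on P S'" using injP Sins by (auto intro: inj_on_subset)
      show "inj_on (Q'c c) S'"
      proof (rule inj_onI)
        fix x x' assume xx: "x \<in> S'" "x' \<in> S'" "Q'c c x = Q'c c x'"
        show "x = x'"
        proof (cases "Q x = c"; cases "Q x' = c")
          assume "Q x = c" "Q x' = c"
          thus ?thesis using injQ xx Sins unfolding inj_on_def by auto
        next
          assume "Q x = c" "Q x' \<noteq> c"
          thus ?thesis using xx Qy[of x'] unfolding Q'c_def by auto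
        next
          assume "Q x \<noteq> c" "Q x' = c"
          thus ?thesis using xx Qy[of x] unfolding Q'c_def by auto
        next
          assume "Q x \<noteq> c" "Q x' \<noteq> c"
          thus ?thesis using injQ xx Sins unfolding inj_on_def Q'c_def by auto
        qed
      qed
      show "\<forall>x\<in>S'. card S' \<le> card (L'c c x)"
      proof
        fix x assume x: "x \<in> S'"
        have "Suc m < card (L x)" using others[of x] x cS unfolding S'_def by auto
        thus "card S' \<le> card (L'c c x)" using cardL'[OF x, of c] cS' by simp
      qed
      show "\<forall>x\<in>S'. \<forall>x'\<in>S'. x \<noteq> x' \<longrightarrow> card S' < card (L'c c x) \<or> card S' < card (L'c c x')"
      proof (intro ballI impI)
        fix x x' assume xx: "x \<in> S'" "x' \<in> S'" "x \<noteq> x'"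
        have "Q x \<noteq> c \<or> Q x' \<noteq> c" using injQ xx Sins unfolding inj_on_def by auto
        moreover have "card S' < card (L'c c z)" if "z \<in> S'" "Q z \<noteq> c" for z
        proof -
          have "Suc m < card (L z)" using others[of z] that cS unfolding S'_def by auto
          thus ?thesis using cardL'1[OF that] cS' by simp
        qed
        ultimately show "card S' < card (L'c c x) \<or> card S' < card (L'c c x')" using xx by blast
      qed
    qed
    thus ?thesis using cS' by simp
  qed
  have IH2: "(\<Prod>x\<in>S'. max 1 (card (L x) - 3 * Suc m)) \<le> card (goodset S' (L'c c) P (Q'c c))" for c
  proof -
    have "(\<Prod>x\<in>S'. max 1 (card (L x) - 3 * Suc m)) \<le> (\<Prod>x\<in>S'. max 1 (card (L'c c x) - 3 * m))"
    proof (rule prod_mono)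
      fix x assume x: "x \<in> S'"
      have "card (L x) - 3 * Suc m \<le> card (L'c c x) - 3 * m" using cardL'[OF x, of c] by simp
      thus "0 \<le> max 1 (card (L x) - 3 * Suc m) \<and> max 1 (card (L x) - 3 * Suc m) \<le> max 1 (card (L'c c x) - 3 * m)"
        by simp
    qed
    thus ?thesis using IH[of c] by simp
  qed
  define A where "A c = (\<lambda>R'. R'(y := c)) ` goodset S' (L'c c) P (Q'c c)" for c
  have Asub: "A c \<subseteq> goodset S L P Q" if "c \<in> Cset" for c
  proof
    fix R assume "R \<in> A c"
    then obtain R' where R': "R' \<in> goodset S' (L'c c) P (Q'c c)" and R: "R = R'(y := c)" unfolding A_def by blast
    have "R'(y := c) \<in> goodset (insert y S') L P Q"
    proof (rule extend_good[OF S'fin yS'])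
      show "c \<in> L y" "c \<notin> P ` S'" using that unfolding Cset_def by auto
      show "inj_on Q (insert y S')" using injQ Sins by simp
      show "\<And>x. L'c c x = L x - {c} - (if Q x = c then {Q y} else {})" unfolding L'c_def ..
      show "\<And>x. Q'c c x = (if Q x = c then Q y else Q x)" unfolding Q'c_def ..
    qed (rule R')
    thus "R \<in> goodset S L P Q" using R Sins by simp
  qed
  have cardA: "card (A c) = card (goodset S' (L'c c) P (Q'c c))" for c
    unfolding A_def
  proof (rule card_image, rule inj_onI)
    fix R1 R2 assume R: "R1 \<in> goodset S' (L'c c) P (Q'c c)" "R2 \<in> goodset S' (L'c c) P (Q'c c)"
      "R1(y := c) = R2(y := c)"
    have "R1 y = R2 y" using R(1,2) yS' unfolding goodset_def by (auto simp: PiE_def extensional_def)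
    thus "R1 = R2" using R(3) by (metis fun_upd_triv fun_upd_upd)
  qed
  have finA: "finite (A c)" for c
    unfolding A_def using S'fin finL Sins by (intro finite_imageI goodset_finite) (auto simp: L'c_def)
  have disj: "A c \<inter> A c' = {}" if "c \<noteq> c'" for c c'
    unfolding A_def using that by (auto dest!: fun_cong[of _ _ y])
  have "(\<Sum>c\<in>Cset. card (A c)) = card (\<Union>c\<in>Cset. A c)"
    by (rule card_UN_disjoint[symmetric]) (use finC finA disj in auto)
  also have "\<dots> \<le> card (goodset S L P Q)"
    by (intro card_mono goodset_finite) (use fin finL Asub in auto)
  finally have sumle: "(\<Sum>c\<in>Cset. card (A c)) \<le> card (goodset S L P Q)" .
  have "card Cset * (\<Prod>x\<in>S'. max 1 (card (L x) - 3 * Suc m)) \<le> (\<Sum>c\<in>Cset. card (A c))"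
  proof -
    have "card Cset * (\<Prod>x\<in>S'. max 1 (card (L x) - 3 * Suc m)) = (\<Sum>c\<in>Cset. (\<Prod>x\<in>S'. max 1 (card (L x) - 3 * Suc m)))"
      by simp
    also have "\<dots> \<le> (\<Sum>c\<in>Cset. card (A c))"
      using IH2 by (intro sum_mono) (simp only: cardA)
    finally show ?thesis .
  qed
  moreover have "max 1 (card (L y) - 3 * Suc m) \<le> card Cset"
  proof -
    have "Suc m \<le> card (L y)" using big y cS by auto
    thus ?thesis using cardC by simp
  qed
  ultimately have "max 1 (card (L y) - 3 * Suc m) * (\<Prod>x\<in>S'. max 1 (card (L x) - 3 * Suc m)) \<le> card (goodset S L P Q)"
    using sumle by (meson le_trans mult_le_mono1)
  moreover have "(\<Prod>x\<in>S. max 1 (card (L x) - 3 * card S)) = max 1 (card (L y) - 3 * Suc m) * (\<Prod>x\<in>S'. max 1 (card (L x) - 3 * Suc m))"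
    unfolding Sins cS using S'fin yS' Sins cS by simp
  ultimately show ?case by simp
qed

definition cons :: "nat \<Rightarrow> (nat \<Rightarrow> nat set) \<Rightarrow> nat set" where
  "cons d L = {x\<in>{1..d}. card (L x) \<noteq> d + 1}"

lemma card_colours[simp]: "card (colours d) = d + 1" and fin_colours[simp]: "finite (colours d)"
  unfolding colours_def by auto

lemma acyc_sym:
  assumes fin: "finite S" and ac: "acyc S P R"
  shows "acyc S R P"
proof -
  from ac obtain \<rho> :: "nat \<Rightarrow> nat" where \<rho>: "\<And>x v. x \<in> S \<Longrightarrow> v \<in> S \<Longrightarrow> x \<noteq> v \<Longrightarrow> P x = R v \<Longrightarrow> \<rho> v < \<rho> x"
    unfolding acyc_def by blast
  define M where "M = (\<Sum>z\<in>S. \<rho> z)"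
  have le: "\<rho> z \<le> M" if "z \<in> S" for z unfolding M_def using fin that by (intro member_le_sum) auto
  define \<sigma> where "\<sigma> z = M - \<rho> z" for z
  have "\<sigma> v < \<sigma> x" if "x \<in> S" "v \<in> S" "x \<noteq> v" "R x = P v" for x v
  proof -
    have "\<rho> x < \<rho> v" by (rule \<rho>[of v x]) (use that in auto)
    moreover have "\<rho> v \<le> M" using le that(2) .
    ultimately show ?thesis unfolding \<sigma>_def by (intro diff_less_mono2) auto
  qed
  thus ?thesis unfolding acyc_def by blast
qed

lemma acyc_cong:
  assumes "\<And>x. x \<in> S \<Longrightarrow> P x = P' x" "\<And>x. x \<in> S \<Longrightarrow> R x = R' x"
  shows "acyc S P R \<longleftrightarrow> acyc S P' R'"
  unfolding acyc_def using assms by auto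

lemma cons_constrained: "constrained d L x \<longleftrightarrow> x \<in> cons d L"
  unfolding constrained_def cons_def by auto

definition OmC :: "nat \<Rightarrow> (nat \<Rightarrow> nat set) \<Rightarrow> (nat \<Rightarrow> nat) set" where
  "OmC d L = {p \<in> PiE (cons d L) L. inj_on p (cons d L)}"

definition Efac :: "nat \<Rightarrow> (nat \<Rightarrow> nat set) \<Rightarrow> nat" where
  "Efac d L = (\<Prod>i\<in>{0..<d - card (cons d L)}. (d + 1 - card (cons d L)) - i)"

context
  fixes t d :: nat and L :: "nat \<Rightarrow> nat set"
  assumes tf: "t_feasible t d L" and d1: "d \<ge> 1" and t1: "t \<ge> 1"
begin

lemma L_sub: "x \<in> {1..d} \<Longrightarrow> L x \<subseteq> colours d"
  using tf unfolding t_feasible_def by auto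

lemma L_fin: "x \<in> {1..d} \<Longrightarrow> finite (L x)"
  using L_sub finite_subset fin_colours by blast

lemma cons_le_t: "x \<in> cons d L \<Longrightarrow> x \<le> t"
  using tf unfolding t_feasible_def cons_def by (metis (mono_tags, lifting) mem_Collect_eq not_le)

lemma cons_card: "x \<in> cons d L \<Longrightarrow> t + 1 \<le> card (L x)"
  using tf cons_le_t unfolding t_feasible_def cons_def by auto

lemma cons_sub: "cons d L \<subseteq> {1..d}" unfolding cons_def by auto

lemma cons_fin: "finite (cons d L)" using cons_sub finite_subset by blast

lemma cons_card_le: "card (cons d L) \<le> t"
proof -
  have "cons d L \<subseteq> {1..t}" using cons_le_t cons_sub by auto
  hence "card (cons d L) \<le> card {1..t}" by (intro card_mono) auto
  thus ?thesis by simp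
qed

lemma free_L: "x \<in> {1..d} \<Longrightarrow> x \<notin> cons d L \<Longrightarrow> L x = colours d"
  using L_sub[of x] unfolding cons_def by (intro card_subset_eq) auto

lemma t_le_d: "t \<le> d"
proof -
  have "1 \<in> {1..d}" using d1 by simp
  hence "t + 1 \<le> card (L 1)" using tf t1 unfolding t_feasible_def by auto
  moreover have "card (L 1) \<le> card (colours d)" using L_sub[of 1] d1 by (intro card_mono) auto
  ultimately show ?thesis by simp
qed

lemma d_free: "d \<notin> cons d L"
proof
  assume a: "d \<in> cons d L"
  hence "d \<le> t" by (rule cons_le_t)
  hence "d = t" using t_le_d by simp
  hence "d + 1 \<le> card (L d)" using cons_card[OF a] by simp
  moreover have "card (L d) \<le> d + 1" using L_sub[of d] d1 card_mono[of "colours d" "L d"] by auto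
  ultimately show False using a unfolding cons_def by simp
qed

lemma cons_lt_d: "card (cons d L) < d"
proof -
  have "cons d L \<subseteq> {1..d} - {d}" using cons_sub d_free by auto
  hence "card (cons d L) \<le> card ({1..d} - {d})" by (intro card_mono) auto
  thus ?thesis using d1 by simp
qed

lemma Omega_props:
  assumes "\<alpha> \<in> Omega d L"
  shows "inj_on \<alpha> {1..d}" "\<alpha> ` {1..d} \<subseteq> colours d" "\<And>x. x \<in> {1..d} \<Longrightarrow> \<alpha> x \<in> L x"
    "\<alpha> \<in> extensional {1..d}"
proof -
  have m: "\<And>x. x \<in> {1..d} \<Longrightarrow> \<alpha> x \<in> L x" using assms unfolding Omega_def by (auto simp: PiE_iff)
  show "\<And>x. x \<in> {1..d} \<Longrightarrow> \<alpha> x \<in> L x" by (rule m)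
  show "\<alpha> ` {1..d} \<subseteq> colours d" using m L_sub by blast
  show "inj_on \<alpha> {1..d}" "\<alpha> \<in> extensional {1..d}" using assms unfolding Omega_def by (auto simp: PiE_iff)
qed

lemma ext0:
  assumes "\<alpha> \<in> Omega d L"
  shows "ext_col d \<alpha> 0 \<in> colours d" "ext_col d \<alpha> 0 \<notin> \<alpha> ` {1..d}"
proof -
  have "card (\<alpha> ` {1..d}) = d" using Omega_props(1)[OF assms] by (simp add: card_image)
  hence "card (colours d - \<alpha> ` {1..d}) = 1" using Omega_props(2)[OF assms]
    by (simp add: card_Diff_subset finite_subset)
  then obtain c where c: "colours d - \<alpha> ` {1..d} = {c}" by (rule card_1_singletonE)
  have "ext_col d \<alpha> 0 = c" unfolding ext_col_def c by simp
  thus "ext_col d \<alpha> 0 \<in> colours d" "ext_col d \<alpha> 0 \<notin> \<alpha> ` {1..d}" using c by auto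
qed

lemma ext_inj:
  assumes "\<alpha> \<in> Omega d L"
  shows "inj_on (ext_col d \<alpha>) {0..d}"
proof (rule inj_onI)
  fix x y assume xy: "x \<in> {0..d}" "y \<in> {0..d}" "ext_col d \<alpha> x = ext_col d \<alpha> y"
  show "x = y"
  proof (cases "x = 0"; cases "y = 0")
    assume "x = 0" "y \<noteq> 0"
    hence "y \<in> {1..d}" using xy by auto
    hence "ext_col d \<alpha> y \<in> \<alpha> ` {1..d}" using \<open>y \<noteq> 0\<close> unfolding ext_col_def by simp
    thus ?thesis using xy \<open>x = 0\<close> ext0(2)[OF assms] by simp
  next
    assume "x \<noteq> 0" "y = 0"
    hence "x \<in> {1..d}" using xy by auto
    hence "ext_col d \<alpha> x \<in> \<alpha> ` {1..d}" using \<open>x \<noteq> 0\<close> unfolding ext_col_def by simp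
    thus ?thesis using xy \<open>y = 0\<close> ext0(2)[OF assms] by simp
  next
    assume "x \<noteq> 0" "y \<noteq> 0"
    hence "\<alpha> x = \<alpha> y" "x \<in> {1..d}" "y \<in> {1..d}" using xy unfolding ext_col_def by auto
    thus ?thesis using Omega_props(1)[OF assms] by (auto dest: inj_onD)
  qed simp
qed

lemma ext_range:
  assumes "\<alpha> \<in> Omega d L" "x \<in> {0..d}"
  shows "ext_col d \<alpha> x \<in> colours d"
  using assms ext0(1)[OF assms(1)] Omega_props(2)[OF assms(1)] unfolding ext_col_def by auto

lemma ext_onto:
  assumes "\<alpha> \<in> Omega d L"
  shows "ext_col d \<alpha> ` {0..d} = colours d"
proof -
  have "ext_col d \<alpha> ` {0..d} \<subseteq> colours d" using ext_range[OF assms] by auto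
  moreover have "card (ext_col d \<alpha> ` {0..d}) = card (colours d)"
    using ext_inj[OF assms] by (simp add: card_image)
  ultimately show ?thesis by (intro card_subset_eq) auto
qed

lemma perm_f_prop:
  assumes a: "\<alpha> \<in> Omega d L" and b: "\<beta> \<in> Omega d L" and x: "x \<in> {0..d}"
  shows "perm_f d \<alpha> \<beta> x \<in> {0..d} \<and> ext_col d \<alpha> x = ext_col d \<beta> (perm_f d \<alpha> \<beta> x)"
proof -
  have "ext_col d \<alpha> x \<in> ext_col d \<beta> ` {0..d}" using ext_range[OF a x] ext_onto[OF b] by simp
  then obtain y where y: "y \<in> {0..d}" "ext_col d \<alpha> x = ext_col d \<beta> y" by auto
  have "\<exists>!y. y \<in> {0..d} \<and> ext_col d \<alpha> x = ext_col d \<beta> y"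
  proof (rule ex1I[of _ y])
    show "y \<in> {0..d} \<and> ext_col d \<alpha> x = ext_col d \<beta> y" using y by simp
    fix y' assume "y' \<in> {0..d} \<and> ext_col d \<alpha> x = ext_col d \<beta> y'"
    thus "y' = y" using y inj_onD[OF ext_inj[OF b], of y' y] by simp
  qed
  thus ?thesis unfolding perm_f_def by (rule theI')
qed

lemma perm_f_eq:
  assumes a: "\<alpha> \<in> Omega d L" and b: "\<beta> \<in> Omega d L" and x: "x \<in> {0..d}" and y: "y \<in> {0..d}"
    and e: "ext_col d \<alpha> x = ext_col d \<beta> y"
  shows "perm_f d \<alpha> \<beta> x = y"
proof -
  have p: "perm_f d \<alpha> \<beta> x \<in> {0..d}" "ext_col d \<alpha> x = ext_col d \<beta> (perm_f d \<alpha> \<beta> x)"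
    using perm_f_prop[OF a b x] by auto
  have "ext_col d \<beta> (perm_f d \<alpha> \<beta> x) = ext_col d \<beta> y" using p(2) e by (rule subst)
  thus ?thesis using inj_onD[OF ext_inj[OF b]] p(1) y by blast
qed

lemma ext_nz: "x \<noteq> 0 \<Longrightarrow> ext_col d \<alpha> x = \<alpha> x"
  unfolding ext_col_def by simp

lemma edge_perm:
  assumes a: "\<sigma> \<in> Omega d L" and b: "\<eta> \<in> Omega d L" and x: "x \<in> cons d L" and v: "v \<in> cons d L"
    and e: "\<sigma> x = \<eta> v"
  shows "perm_f d \<sigma> \<eta> x = v"
proof -
  have x1: "x \<in> {1..d}" "v \<in> {1..d}" using x v cons_sub by auto
  hence "x \<noteq> 0" "v \<noteq> 0" by auto
  hence "ext_col d \<sigma> x = ext_col d \<eta> v" using e by (simp add: ext_nz)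
  thus ?thesis using perm_f_eq[OF a b] x1 by auto
qed

lemma good_imp_acyc:
  assumes a: "\<sigma> \<in> Omega d L" and b: "\<eta> \<in> Omega d L" and g: "good d L \<sigma> \<eta>"
  shows "acyc (cons d L) \<sigma> \<eta>"
proof -
  define f where "f = perm_f d \<sigma> \<eta>"
  define P where "P z n \<longleftrightarrow> \<not> ((f^^n) z \<in> cons d L \<and> f ((f^^n) z) \<noteq> (f^^n) z)" for z n
  define \<rho> where "\<rho> z = (LEAST n. P z n)" for z
  have "\<rho> v < \<rho> x" if xv: "x \<in> cons d L" "v \<in> cons d L" "x \<noteq> v" "\<sigma> x = \<eta> v" for x v
  proof -
    have fx: "f x = v" unfolding f_def by (rule edge_perm[OF a b xv(1,2,4)])
    have x0: "x \<in> {0..d}" using xv(1) cons_sub by auto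
    have fxx: "perm_f d \<sigma> \<eta> x \<noteq> x" using fx xv(3) unfolding f_def by simp
    have "\<not> (\<forall>n. constrained d L ((f^^n) x))"
      using g x0 fxx unfolding good_def f_def by blast
    then obtain n where "\<not> constrained d L ((f^^n) x)" by blast
    hence Pn: "P x n" unfolding P_def cons_constrained by simp
    have P0: "\<not> P x 0" unfolding P_def using xv fx by simp
    have "\<rho> x = Suc (LEAST m. P x (Suc m))" unfolding \<rho>_def using Least_Suc[of "P x", OF Pn P0] .
    moreover have "P x (Suc m) = P v m" for m
      unfolding P_def funpow_Suc_right comp_def fx ..
    ultimately have "\<rho> x = Suc (\<rho> v)" unfolding \<rho>_def by simp
    thus ?thesis by simp
  qed
  thus ?thesis unfolding acyc_def by blast
qed

lemma acyc_imp_good: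
  assumes a: "\<sigma> \<in> Omega d L" and b: "\<eta> \<in> Omega d L" and ac: "acyc (cons d L) \<sigma> \<eta>"
  shows "good d L \<sigma> \<eta>"
proof (rule ccontr)
  assume "\<not> good d L \<sigma> \<eta>"
  then obtain x where x: "x \<in> {0..d}" "perm_f d \<sigma> \<eta> x \<noteq> x"
    and allc: "\<And>n. constrained d L ((perm_f d \<sigma> \<eta> ^^ n) x)" unfolding good_def by blast
  define f where "f = perm_f d \<sigma> \<eta>"
  define a where "a n = (f^^n) x" for n
  have aC: "a n \<in> cons d L" for n using allc unfolding a_def f_def cons_constrained by blast
  have a1: "a n \<in> {1..d}" for n using subsetD[OF cons_sub aC] .
  have a0: "a n \<in> {0..d}" for n using a1[of n] by auto
  have aS: "a (Suc n) = f (a n)" for n unfolding a_def by simp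
  from ac obtain \<rho> :: "nat \<Rightarrow> nat" where \<rho>: "\<And>x v. x \<in> cons d L \<Longrightarrow> v \<in> cons d L \<Longrightarrow> x \<noteq> v \<Longrightarrow> \<sigma> x = \<eta> v \<Longrightarrow> \<rho> v < \<rho> x"
    unfolding acyc_def by blast
  have finj: "z1 = z2" if "z1 \<in> {0..d}" "z2 \<in> {0..d}" "f z1 = f z2" for z1 z2
  proof -
    have "ext_col d \<sigma> z1 = ext_col d \<eta> (f z1)" using perm_f_prop[OF a b that(1)] unfolding f_def by blast
    also have "\<dots> = ext_col d \<eta> (f z2)" using that(3) by (rule arg_cong)
    also have "\<dots> = ext_col d \<sigma> z2" using perm_f_prop[OF a b that(2)] unfolding f_def by (rule sym[OF conjunct2])
    finally show ?thesis using inj_onD[OF ext_inj[OF a]] that(1,2) by blast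
  qed
  have neq: "a n \<noteq> a (Suc n)" for n
  proof (induct n)
    case 0 thus ?case using x(2) unfolding a_def f_def by simp
  next
    case (Suc n)
    show ?case
    proof
      assume "a (Suc n) = a (Suc (Suc n))"
      hence "f (a n) = f (a (Suc n))" using aS by simp
      hence "a n = a (Suc n)" by (rule finj[OF a0 a0])
      thus False using Suc by simp
    qed
  qed
  have edge: "\<sigma> (a n) = \<eta> (a (Suc n))" for n
  proof -
    have "ext_col d \<sigma> (a n) = ext_col d \<eta> (f (a n))" using perm_f_prop[OF a b a0] unfolding f_def by blast
    also have "f (a n) = a (Suc n)" using aS by (rule sym)
    finally have e: "ext_col d \<sigma> (a n) = ext_col d \<eta> (a (Suc n))" .
    have "a n \<noteq> 0" "a (Suc n) \<noteq> 0" using a1[of n] a1[of "Suc n"] by auto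
    thus ?thesis using e ext_nz by metis
  qed
  have dec: "\<rho> (a (Suc n)) < \<rho> (a n)" for n using \<rho>[OF aC aC neq edge] .
  have "\<rho> (a n) + n \<le> \<rho> (a 0)" for n
  proof (induct n)
    case (Suc n) thus ?case using dec[of n] by simp
  qed simp
  from this[of "Suc (\<rho> (a 0))"] show False by simp
qed

lemma good_iff_acyc:
  assumes "\<sigma> \<in> Omega d L" "\<eta> \<in> Omega d L"
  shows "good d L \<sigma> \<eta> \<longleftrightarrow> acyc (cons d L) \<sigma> \<eta>"
  using good_imp_acyc[OF assms] acyc_imp_good[OF assms] by blast

lemma Omega_fin: "finite (Omega d L)"
proof -
  have "finite (PiE {1..d} L)" using L_fin by (intro finite_PiE) auto
  thus ?thesis unfolding Omega_def by (rule finite_subset[rotated]) auto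
qed

lemma restrict_OmC:
  assumes a: "\<alpha> \<in> Omega d L"
  shows "restrict \<alpha> (cons d L) \<in> OmC d L"
proof -
  have m: "\<alpha> x \<in> L x" if "x \<in> cons d L" for x using Omega_props(3)[OF a] subsetD[OF cons_sub that] .
  have "restrict \<alpha> (cons d L) \<in> PiE (cons d L) L" by (rule PiE_I) (auto simp: m)
  moreover have "inj_on \<alpha> (cons d L)" using inj_on_subset[OF Omega_props(1)[OF a] cons_sub] .
  hence "inj_on (restrict \<alpha> (cons d L)) (cons d L)" by (simp add: inj_on_def)
  ultimately show ?thesis unfolding OmC_def by simp
qed

lemma OmC_fin: "finite (OmC d L)"
proof -
  have "\<And>x. x \<in> cons d L \<Longrightarrow> finite (L x)" using L_fin subsetD[OF cons_sub] by blast
  hence "finite (PiE (cons d L) L)" using cons_fin by (intro finite_PiE) auto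
  thus ?thesis unfolding OmC_def by (rule finite_subset[rotated]) auto
qed

lemma fibre_card:
  assumes p: "p \<in> OmC d L"
  shows "card {\<alpha> \<in> Omega d L. restrict \<alpha> (cons d L) = p} = Efac d L"
proof -
  let ?C = "cons d L"
  define F where "F = {1..d} - ?C"
  define T where "T = colours d - p ` ?C"
  define merge where "merge g = (\<lambda>x. if x \<in> ?C then p x else g x)" for g :: "nat \<Rightarrow> nat"
  define IF where "IF = {g \<in> F \<rightarrow>\<^sub>E T. inj_on g F}"
  have pPi: "p \<in> PiE ?C L" and pinj: "inj_on p ?C" using p unfolding OmC_def by auto
  have pL: "p x \<in> L x" if "x \<in> ?C" for x using pPi that by auto
  have pcol: "p ` ?C \<subseteq> colours d" using pL L_sub cons_sub by blast
  have pext: "p x = undefined" if "x \<notin> ?C" for x using pPi that by (auto simp: PiE_def extensional_def)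
  have "{\<alpha> \<in> Omega d L. restrict \<alpha> ?C = p} = merge ` IF"
  proof (intro equalityI subsetI)
    fix \<alpha> assume "\<alpha> \<in> {\<alpha> \<in> Omega d L. restrict \<alpha> ?C = p}"
    hence a: "\<alpha> \<in> Omega d L" and r: "restrict \<alpha> ?C = p" by auto
    have pa: "p x = \<alpha> x" if "x \<in> ?C" for x
    proof -
      have "restrict \<alpha> ?C x = p x" using r by simp
      thus ?thesis using that by simp
    qed
    have ainj: "inj_on \<alpha> {1..d}" and aext: "\<alpha> \<in> extensional {1..d}" using Omega_props[OF a] by auto
    define g where "g = restrict \<alpha> F"
    have gIF: "g \<in> IF" unfolding IF_def
    proof (intro CollectI conjI)
      show "g \<in> F \<rightarrow>\<^sub>E T"
      proof (rule PiE_I)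
        fix x assume x: "x \<in> F"
        hence x1: "x \<in> {1..d}" "x \<notin> ?C" unfolding F_def by auto
        have "\<alpha> x \<in> colours d" using Omega_props(3)[OF a x1(1)] free_L[OF x1] by simp
        moreover have "\<alpha> x \<notin> p ` ?C"
        proof
          assume "\<alpha> x \<in> p ` ?C"
          then obtain z where z: "z \<in> ?C" "\<alpha> x = p z" by auto
          hence "\<alpha> x = \<alpha> z" using pa by simp
          moreover have "z \<in> {1..d}" using z cons_sub by auto
          ultimately have "x = z" using inj_onD[OF ainj _ x1(1)] by blast
          thus False using z x1 by simp
        qed
        ultimately show "g x \<in> T" unfolding g_def T_def using x by simp
      next
        fix x assume "x \<notin> F" thus "g x = undefined" unfolding g_def by simp
      qed
      have "inj_on \<alpha> F" using inj_on_subset[OF ainj] unfolding F_def by blast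
      thus "inj_on g F" unfolding g_def by (simp add: inj_on_def)
    qed
    have "\<alpha> = merge g"
    proof
      fix x show "\<alpha> x = merge g x"
      proof (cases "x \<in> ?C")
        case True thus ?thesis unfolding merge_def using pa by simp
      next
        case False
        show ?thesis
        proof (cases "x \<in> {1..d}")
          case True thus ?thesis using False unfolding merge_def g_def F_def by simp
        next
          case nx: False
          hence "\<alpha> x = undefined" using aext by (auto simp: extensional_def)
          thus ?thesis using False nx unfolding merge_def g_def F_def by simp
        qed
      qed
    qed
    thus "\<alpha> \<in> merge ` IF" using gIF by blast
  next
    fix \<alpha> assume "\<alpha> \<in> merge ` IF"
    then obtain g where g: "g \<in> IF" and a: "\<alpha> = merge g" by blast
    have gT: "g x \<in> T" if "x \<in> F" for x using g that unfolding IF_def by auto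
    have gext: "g x = undefined" if "x \<notin> F" for x using g that unfolding IF_def by (auto simp: PiE_def extensional_def)
    have ginj: "inj_on g F" using g unfolding IF_def by auto
    have "\<alpha> \<in> PiE {1..d} L"
    proof (rule PiE_I)
      fix x assume x: "x \<in> {1..d}"
      show "\<alpha> x \<in> L x"
      proof (cases "x \<in> ?C")
        case True thus ?thesis unfolding a merge_def using pL by simp
      next
        case False
        hence "x \<in> F" unfolding F_def using x by simp
        hence "g x \<in> colours d" using gT unfolding T_def by auto
        thus ?thesis unfolding a merge_def using False free_L[OF x False] by simp
      qed
    next
      fix x assume x: "x \<notin> {1..d}"
      hence "x \<notin> ?C" "x \<notin> F" using cons_sub unfolding F_def by auto
      thus "\<alpha> x = undefined" unfolding a merge_def using gext by simp
    qed
    moreover have "inj_on \<alpha> {1..d}"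
    proof (rule inj_onI)
      fix x y assume xy: "x \<in> {1..d}" "y \<in> {1..d}" "\<alpha> x = \<alpha> y"
      show "x = y"
      proof (cases "x \<in> ?C"; cases "y \<in> ?C")
        assume "x \<in> ?C" "y \<in> ?C"
        thus ?thesis using xy pinj unfolding a merge_def by (auto dest: inj_onD)
      next
        assume c: "x \<in> ?C" "y \<notin> ?C"
        hence "y \<in> F" using xy unfolding F_def by simp
        hence "g y \<notin> p ` ?C" using gT unfolding T_def by auto
        moreover have "g y = p x" using xy c unfolding a merge_def by simp
        ultimately show ?thesis using c by auto
      next
        assume c: "x \<notin> ?C" "y \<in> ?C"
        hence "x \<in> F" using xy unfolding F_def by simp
        hence "g x \<notin> p ` ?C" using gT unfolding T_def by auto
        moreover have "g x = p y" using xy c unfolding a merge_def by simp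
        ultimately show ?thesis using c by auto
      next
        assume c: "x \<notin> ?C" "y \<notin> ?C"
        hence "x \<in> F" "y \<in> F" using xy unfolding F_def by auto
        moreover have "g x = g y" using xy c unfolding a merge_def by simp
        ultimately show ?thesis using ginj by (auto dest: inj_onD)
      qed
    qed
    moreover have "restrict \<alpha> ?C = p"
    proof
      fix x show "restrict \<alpha> ?C x = p x"
        using pext unfolding a merge_def by (cases "x \<in> ?C") auto
    qed
    ultimately show "\<alpha> \<in> {\<alpha> \<in> Omega d L. restrict \<alpha> ?C = p}" unfolding Omega_def by simp
  qed
  moreover have "inj_on merge IF"
  proof (rule inj_onI)
    fix g1 g2 assume g: "g1 \<in> IF" "g2 \<in> IF" "merge g1 = merge g2"
    show "g1 = g2"
    proof
      fix x show "g1 x = g2 x"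
      proof (cases "x \<in> F")
        case True
        hence "x \<notin> ?C" unfolding F_def by simp
        thus ?thesis using fun_cong[OF g(3), of x] unfolding merge_def by simp
      next
        case False
        thus ?thesis using g(1,2) unfolding IF_def by (auto simp: PiE_def extensional_def)
      qed
    qed
  qed
  ultimately have c1: "card {\<alpha> \<in> Omega d L. restrict \<alpha> ?C = p} = card IF" by (simp add: card_image)
  have finF: "finite F" unfolding F_def by simp
  have finT: "finite T" unfolding T_def by simp
  have c2: "card IF = card T ^ (card F - card F) * prod ((-) (card T)) {0..<card F}"
    unfolding IF_def by (rule card_inj_on_subset_funcset[OF finF finT subset_refl])
  have cT: "card T = d + 1 - card ?C"
  proof -
    have "card (p ` ?C) = card ?C" using pinj by (simp add: card_image)
    thus ?thesis unfolding T_def using pcol by (simp add: card_Diff_subset finite_subset)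
  qed
  have cF: "card F = d - card ?C" unfolding F_def using cons_sub by (simp add: card_Diff_subset cons_fin)
  show ?thesis unfolding Efac_def c1 c2 cT cF by simp
qed

lemma sub_card:
  assumes X: "X \<subseteq> OmC d L"
  shows "card {\<alpha> \<in> Omega d L. restrict \<alpha> (cons d L) \<in> X} = card X * Efac d L"
proof -
  have eq: "{\<alpha> \<in> Omega d L. restrict \<alpha> (cons d L) \<in> X} = (\<Union>p\<in>X. {\<alpha> \<in> Omega d L. restrict \<alpha> (cons d L) = p})"
    by auto
  have finX: "finite X" using X OmC_fin finite_subset by blast
  have "card (\<Union>p\<in>X. {\<alpha> \<in> Omega d L. restrict \<alpha> (cons d L) = p}) = (\<Sum>p\<in>X. card {\<alpha> \<in> Omega d L. restrict \<alpha> (cons d L) = p})"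
    by (rule card_UN_disjoint) (use finX Omega_fin in auto)
  also have "\<dots> = (\<Sum>p\<in>X. Efac d L)" using X by (intro sum.cong refl fibre_card) auto
  finally show ?thesis unfolding eq by simp
qed

lemma Efac_ge2: "Efac d L \<ge> 2"
proof -
  define k where "k = d - card (cons d L)"
  have k1: "k \<ge> 1" unfolding k_def using cons_lt_d by simp
  have "Efac d L = (\<Prod>i\<in>{0..<k}. (d + 1 - card (cons d L)) - i)" unfolding Efac_def k_def ..
  also have "{0..<k} = insert 0 {1..<k}" using k1 by auto
  also have "(\<Prod>i\<in>insert 0 {1..<k}. (d + 1 - card (cons d L)) - i) =
     (d + 1 - card (cons d L)) * (\<Prod>i\<in>{1..<k}. (d + 1 - card (cons d L)) - i)" by simp
  finally have e: "Efac d L = (d + 1 - card (cons d L)) * (\<Prod>i\<in>{1..<k}. (d + 1 - card (cons d L)) - i)" .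
  have "(\<Prod>i\<in>{1..<k}. (d + 1 - card (cons d L)) - i) \<ge> 1"
    by (intro prod_ge_1) (auto simp: k_def)
  moreover have "d + 1 - card (cons d L) \<ge> 2" using cons_lt_d by simp
  ultimately show ?thesis unfolding e by (metis mult_le_mono one_le_numeral mult.right_neutral)
qed

lemma cons_count:
  fixes P Q :: "nat \<Rightarrow> nat"
  assumes "inj_on P (cons d L)" "inj_on Q (cons d L)"
  shows "(\<Prod>x\<in>cons d L. max 1 (card (L x) - 3 * card (cons d L))) \<le> card (goodset (cons d L) L P Q)"
proof (rule count_good[OF cons_fin _ assms])
  show "\<forall>x\<in>cons d L. finite (L x)" using L_fin subsetD[OF cons_sub] by blast
  have lt: "card (cons d L) < card (L x)" if "x \<in> cons d L" for x
    using cons_card[OF that] cons_card_le by simp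
  thus "\<forall>x\<in>cons d L. card (cons d L) \<le> card (L x)" by (simp add: less_imp_le)
  show "\<forall>x\<in>cons d L. \<forall>x'\<in>cons d L. x \<noteq> x' \<longrightarrow> card (cons d L) < card (L x) \<or> card (cons d L) < card (L x')"
    using lt by blast
qed

lemma goodset_OmC: "goodset (cons d L) L P Q \<subseteq> OmC d L"
  unfolding goodset_def OmC_def by auto

lemma Omega_card: "card (Omega d L) = card (OmC d L) * Efac d L"
proof -
  have "{\<alpha> \<in> Omega d L. restrict \<alpha> (cons d L) \<in> OmC d L} = Omega d L" using restrict_OmC by blast
  thus ?thesis using sub_card[OF subset_refl] by simp
qed

lemma Omega_ge2: "card (Omega d L) \<ge> 2"
proof -
  have "(\<Prod>x\<in>cons d L. max 1 (card (L x) - 3 * card (cons d L))) \<le> card (goodset (cons d L) L id id)"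
    by (rule cons_count) auto
  moreover have "(\<Prod>x\<in>cons d L. max 1 (card (L x) - 3 * card (cons d L))) \<ge> 1"
    by (intro prod_ge_1) auto
  moreover have "card (goodset (cons d L) L id id) \<le> card (OmC d L)"
    by (rule card_mono[OF OmC_fin goodset_OmC])
  ultimately have "card (OmC d L) \<ge> 1" by linarith
  hence "card (OmC d L) * Efac d L \<ge> 1 * 2" using Efac_ge2 by (intro mult_le_mono) auto
  thus ?thesis using Omega_card by simp
qed

lemma prod_bound:
  fixes s :: "nat \<Rightarrow> nat"
  shows "(\<Prod>x\<in>cons d L. s x) \<le> (6 * t) ^ t * (\<Prod>x\<in>cons d L. max 1 (s x - 3 * card (cons d L)))"
proof -
  let ?m = "card (cons d L)"
  have m: "?m \<le> t" by (rule cons_card_le)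
  have f: "s x \<le> 6 * t * max 1 (s x - 3 * ?m)" for x
  proof (cases "s x \<le> 6 * t")
    case True
    have h: "6 * t \<le> 6 * t * max 1 (s x - 3 * ?m)"
      using mult_le_mono[of "6*t" "6*t" 1 "max 1 (s x - 3*?m)"] by simp
    show ?thesis using True h by (rule le_trans)
  next
    case False
    have "s x \<le> 2 * (s x - 3 * ?m)" using False m by arith
    also have "\<dots> \<le> 6 * t * max 1 (s x - 3 * ?m)" using t1 by (intro mult_le_mono) auto
    finally show ?thesis .
  qed
  have "(\<Prod>x\<in>cons d L. s x) \<le> (\<Prod>x\<in>cons d L. 6 * t * max 1 (s x - 3 * ?m))"
    by (intro prod_mono) (use f in auto)
  also have "\<dots> = (6 * t) ^ ?m * (\<Prod>x\<in>cons d L. max 1 (s x - 3 * ?m))"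
    by (simp add: prod.distrib)
  also have "\<dots> \<le> (6 * t) ^ t * (\<Prod>x\<in>cons d L. max 1 (s x - 3 * ?m))"
    using t1 m by (intro mult_le_mono power_increasing) auto
  finally show ?thesis .
qed

lemma count_main:
  assumes a: "\<sigma> \<in> Omega d L" and b: "\<eta> \<in> Omega d L"
  shows "card (Omega d L) \<le> (6 * t) ^ t * card {\<gamma> \<in> Omega d L. good d L \<sigma> \<gamma> \<and> good d L \<gamma> \<eta>}"
proof -
  let ?C = "cons d L"
  let ?GS = "goodset ?C L \<sigma> \<eta>"
  let ?G' = "{\<alpha> \<in> Omega d L. restrict \<alpha> ?C \<in> ?GS}"
  have injs: "inj_on \<sigma> ?C" "inj_on \<eta> ?C"
    using inj_on_subset[OF Omega_props(1)[OF a] cons_sub] inj_on_subset[OF Omega_props(1)[OF b] cons_sub] .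
  have cnt: "(\<Prod>x\<in>?C. max 1 (card (L x) - 3 * card ?C)) \<le> card ?GS" by (rule cons_count[OF injs])
  have sub: "?G' \<subseteq> {\<gamma> \<in> Omega d L. good d L \<sigma> \<gamma> \<and> good d L \<gamma> \<eta>}"
  proof
    fix \<gamma> assume "\<gamma> \<in> ?G'"
    hence g: "\<gamma> \<in> Omega d L" and gs: "restrict \<gamma> ?C \<in> ?GS" by auto
    have "acyc ?C \<sigma> (restrict \<gamma> ?C)" "acyc ?C (restrict \<gamma> ?C) \<eta>" using gs unfolding goodset_def by auto
    hence "acyc ?C \<sigma> \<gamma>" "acyc ?C \<gamma> \<eta>" by (simp_all add: acyc_cong[of ?C _ _ "restrict \<gamma> ?C" \<gamma>]
        acyc_cong[of ?C "restrict \<gamma> ?C" \<gamma>])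
    thus "\<gamma> \<in> {\<gamma> \<in> Omega d L. good d L \<sigma> \<gamma> \<and> good d L \<gamma> \<eta>}"
      using acyc_imp_good[OF a g] acyc_imp_good[OF g b] g by blast
  qed
  have "card ?G' \<le> card {\<gamma> \<in> Omega d L. good d L \<sigma> \<gamma> \<and> good d L \<gamma> \<eta>}"
    by (rule card_mono) (use Omega_fin sub in auto)
  moreover have "card ?G' = card ?GS * Efac d L" by (rule sub_card[OF goodset_OmC])
  moreover have "card (OmC d L) \<le> (\<Prod>x\<in>?C. card (L x))"
  proof -
    have "OmC d L \<subseteq> PiE ?C L" unfolding OmC_def by auto
    moreover have "\<And>x. x \<in> ?C \<Longrightarrow> finite (L x)" using L_fin subsetD[OF cons_sub] by blast
    hence "finite (PiE ?C L)" using cons_fin by (intro finite_PiE) auto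
    ultimately have "card (OmC d L) \<le> card (PiE ?C L)" by (rule card_mono[rotated])
    thus ?thesis using card_PiE[OF cons_fin, of L] by simp
  qed
  ultimately show ?thesis using Omega_card prod_bound[of "\<lambda>x. card (L x)"] cnt
    by (smt (verit) le_trans mult.assoc mult_le_mono1 mult_le_mono2)
qed

end

theorem lemma12:
  fixes t :: nat
  assumes "t \<ge> 1"
  shows "\<exists>C::real. \<forall>d::nat. \<forall>L :: nat \<Rightarrow> nat set.
           d \<ge> 1 \<longrightarrow> t_feasible t d L \<longrightarrow>
           relax_time (Omega d L) (rate_int d L) \<le> C * relax_time (Omega d L) (rate_unif d L)"
proof (intro exI[of _ "4 * real ((6 * t) ^ t)"] allI impI)
  fix d :: nat and L :: "nat \<Rightarrow> nat set"
  assume d1: "d \<ge> 1" and tf: "t_feasible t d L"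
  note t1 = assms
  define K where "K = real ((6 * t) ^ t)"
  let ?S = "Omega d L"
  have fin: "finite ?S" using Omega_fin[OF tf d1 t1] .
  have c2: "card ?S \<ge> 2" using Omega_ge2[OF tf d1 t1] .
  have unif: "relax_time ?S (rate_unif d L) = 1"
    by (rule relax_unif[OF fin c2]) (simp add: rate_unif_def)
  have Kpos: "K > 0" unfolding K_def using t1 by simp
  have int: "relax_time ?S (rate_int d L) \<le> 4 * K"
  proof (rule relax_int[OF fin c2, of _ "good d L"])
    show "\<And>a b. rate_int d L a b = (if a \<noteq> b \<and> good d L a b then 1 / real (card ?S) else 0)"
      by (simp add: rate_int_def)
    show "\<And>a b. a \<in> ?S \<Longrightarrow> b \<in> ?S \<Longrightarrow> good d L a b = good d L b a"
    proof -
      fix a b assume ab: "a \<in> ?S" "b \<in> ?S"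
      have "acyc (cons d L) a b = acyc (cons d L) b a"
        using acyc_sym[OF cons_fin[OF tf d1 t1]] by blast
      thus "good d L a b = good d L b a"
        using good_iff_acyc[OF tf d1 t1 ab] good_iff_acyc[OF tf d1 t1 ab(2,1)] by simp
    qed
    show "0 < K" by (rule Kpos)
    fix a b assume ab: "a \<in> ?S" "b \<in> ?S"
    have "card ?S \<le> (6 * t) ^ t * card {c \<in> ?S. good d L a c \<and> good d L c b}"
      by (rule count_main[OF tf d1 t1 ab])
    hence "real (card ?S) \<le> real ((6 * t) ^ t * card {c \<in> ?S. good d L a c \<and> good d L c b})"
      by (rule of_nat_mono)
    thus "real (card ?S) \<le> K * real (card {c \<in> ?S. good d L a c \<and> good d L c b})"
      unfolding K_def by simp
  qed
  show "relax_time ?S (rate_int d L) \<le> 4 * real ((6 * t) ^ t) * relax_time ?S (rate_unif d L)"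
    using int unif unfolding K_def by simp
qed

end
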